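(* Let $b$ be a prime, $m,s\in\mathbb{N}$, and let $P=P(C_1,\ldots,C_s)$ be a digital $(t,m,s)$-net in base $b$ with square generating matrices $C_1,\ldots,C_s\in\mathbb{F}_b^{m\times m}$. For each nonempty $u\subseteq\{1,\dots,s\}$ let $t_u$ be such that the projection $P_u$ of $P$ onto the coordinates in $u$ is a $(t_u,m,|u|)$-net in base $b$. Let $L_1,\dots,L_s$ be drawn independently at random from $\mathcal{L}_{\infty,m}$. Let $\boldsymbol{k}=(k_1,\ldots,k_s)\in\mathbb{N}_0^s\setminus\{\boldsymbol{0}\}$ and $u=\{j\mid k_j\neq0\}$. If $k_j<b^m$ for all $j$, then \[\Pr\left[\boldsymbol{k}\in P^\perp(L_1C_1,\ldots,L_sC_s)\right]\le\left(\frac{b}{b-1}\right)^{|u|-1}b^{-m+t_u}.\] If $k_j\ge b^m$ for some $j$, and each $C_j$ is non-singular, then \[\Pr\left[\boldsymbol{k}\in P^\perp(L_1C_1,\ldots,L_sC_s)\right]=\frac{1}{b^m}.\]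
   Context: $\mathbb{F}_b$ is the field with $b$ elements. Digital net: for $n\in\mathbb{N}\cup\{\infty\}$ and $D_1,\dots,D_s\in\mathbb{F}_b^{n\times m}$, the digital net $P(D_1,\dots,D_s)$ is the multiset of $b^m$ points $\boldsymbol{x}_k=(\psi_n(D_1\vec\kappa),\dots,\psi_n(D_s\vec\kappa))$, $0\le k<b^m$, where $\vec\kappa=(\kappa_0,\dots,\kappa_{m-1})^\top$ are the $b$-adic digits of $k=\sum_{i=0}^{m-1}\kappa_ib^i$ and $\psi_n((y_1,\dots,y_n)^\top)=\sum_{i=1}^ny_ib^{-i}$. A $b$-adic elementary interval is $\prod_{j}[c_jb^{-a_j},(c_j+1)b^{-a_j})$ with $a_j\in\mathbb{N}_0$, $0\le c_j<b^{a_j}$; a $b^m$-point set in $[0,1)^s$ is a $(t,m,s)$-net in base $b$ if every elementary interval of volume $b^{-m+t}$ contains exactly $b^t$ points; a digital $(t,m,s)$-net is a digital net that is a $(t,m,s)$-net. For $k\in\mathbb{N}_0$ with digits $\kappa_0,\kappa_1,\dots$, $\vec k=(\kappa_0,\kappa_1,\dots)^\top$ and $\mathrm{tr}_n(\vec k)=(\kappa_0,\dots,\kappa_{n-1})^\top$ ($\mathrm{tr}_\infty(\vec k)=\vec k$). Dual net: $P^\perp(D_1,\dots,D_s)=\{\boldsymbol{k}\in\mathbb{N}_0^s\mid D_1^\top\mathrm{tr}_n(\vec k_1)+\cdots+D_s^\top\mathrm{tr}_n(\vec k_s)=\boldsymbol 0\in\mathbb{F}_b^m\}$. $\mathcal{L}_{\infty,m}$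 is the set of matrices $L=(\ell_{i,j})\in\mathbb{F}_b^{\infty\times m}$ with $\ell_{i,j}=0$ for $i<j$ and $\ell_{i,i}\neq0$; a random element has independent entries, diagonal uniform on $\mathbb{F}_b\setminus\{0\}$ and entries with $i>j$ uniform on $\mathbb{F}_b$. Thus $L_jC_j\in\mathbb{F}_b^{\infty\times m}$. *)

theory Defs
  imports "HOL-Probability.Probability"
begin

text \<open>Elements of F_b are represented by naturals in {0..<b} (b prime), arithmetic mod b.
  Coordinates are indexed by j in {1..s}; matrix rows/columns are indexed from 0.
  A matrix is a function row -> column -> entry.\<close>

definition digit :: "nat \<Rightarrow> nat \<Rightarrow> nat \<Rightarrow> nat" where
  "digit b k i = (k div b ^ i) mod b"

text \<open>The point x_k of the digital net P(C_1,...,C_s) with square m x m matrices (n = m);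
  coordinate j is psi_m(C_j kappa).\<close>
definition net_point :: "nat \<Rightarrow> nat \<Rightarrow> (nat \<Rightarrow> nat \<Rightarrow> nat \<Rightarrow> nat) \<Rightarrow> nat \<Rightarrow> nat \<Rightarrow> real" where
  "net_point b m C k j =
     (\<Sum>i<m. real ((\<Sum>l<m. C j i l * digit b k l) mod b) / real b ^ Suc i)"

text \<open>The (multi)set of points x_k, k < b^m, projected to the coordinates in u, is a
  (t,m,|u|)-net in base b: every b-adic elementary interval (in the coordinates of u) of
  volume b^(-m+t) contains exactly b^t points (counted with multiplicity via indices k).\<close>
definition is_net :: "nat \<Rightarrow> nat \<Rightarrow> nat \<Rightarrow> nat set \<Rightarrow> (nat \<Rightarrow> nat \<Rightarrow> real) \<Rightarrow> bool" where
  "is_net b t m u x \<longleftrightarrow>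
     (\<forall>a c :: nat \<Rightarrow> nat. (\<Sum>j\<in>u. a j) + t = m \<longrightarrow> (\<forall>j\<in>u. c j < b ^ a j) \<longrightarrow>
        card {k. k < b ^ m \<and> (\<forall>j\<in>u. real (c j) / real b ^ a j \<le> x k j
                                   \<and> x k j < real (c j + 1) / real b ^ a j)} = b ^ t)"

text \<open>Dual net membership for matrices D_j in F_b^(infinity x m) (entry D j i r, row i, column r
  < m): sum_j D_j^T tr_infinity(k_j) = 0 in F_b^m. The sum over rows is over the (finitely many)
  nonzero digits of k_j.\<close>
definition in_dual :: "nat \<Rightarrow> nat \<Rightarrow> nat \<Rightarrow> (nat \<Rightarrow> nat \<Rightarrow> nat \<Rightarrow> nat) \<Rightarrow> (nat \<Rightarrow> nat) \<Rightarrow> bool" where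
  "in_dual b m s D k \<longleftrightarrow>
     (\<forall>r<m. (\<Sum>j\<in>{1..s}. \<Sum>i\<in>{i. digit b (k j) i \<noteq> 0}. D j i r * digit b (k j) i) mod b = 0)"

definition mat_prod :: "nat \<Rightarrow> nat \<Rightarrow> (nat \<Rightarrow> nat \<Rightarrow> nat) \<Rightarrow> (nat \<Rightarrow> nat \<Rightarrow> nat) \<Rightarrow> nat \<Rightarrow> nat \<Rightarrow> nat" where
  "mat_prod b m A B i r = (\<Sum>l<m. A i l * B l r) mod b"

text \<open>Index set of the free (random) entries of L_1,...,L_s in L_{infinity,m}:
  (j,i,l) with j in {1..s}, column l < m and l \<le> i (entries above the diagonal are 0).\<close>
definition L_index :: "nat \<Rightarrow> nat \<Rightarrow> (nat \<times> nat \<times> nat) set" where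
  "L_index m s = {(j, i, l). j \<in> {1..s} \<and> l < m \<and> l \<le> i}"

definition L_measure :: "nat \<Rightarrow> nat \<Rightarrow> nat \<Rightarrow> (nat \<times> nat \<times> nat \<Rightarrow> nat) measure" where
  "L_measure b m s = PiM (L_index m s)
     (\<lambda>(j, i, l). measure_pmf (pmf_of_set (if i = l then {1..<b} else {0..<b})))"

definition L_of :: "nat \<Rightarrow> (nat \<times> nat \<times> nat \<Rightarrow> nat) \<Rightarrow> nat \<Rightarrow> nat \<Rightarrow> nat \<Rightarrow> nat" where
  "L_of m \<omega> j i l = (if l < m \<and> l \<le> i then \<omega> (j, i, l) else 0)"

definition nonsingular :: "nat \<Rightarrow> nat \<Rightarrow> (nat \<Rightarrow> nat \<Rightarrow> nat) \<Rightarrow> bool" where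
  "nonsingular b m C \<longleftrightarrow>
     (\<exists>B. \<forall>i<m. \<forall>r<m. (\<Sum>l<m. B i l * C l r) mod b = (if i = r then 1 else 0))"

end

theory Submission
  imports Defs
begin

lemma prob_finite_dep:
  fixes A :: "'i \<Rightarrow> nat set" and I F :: "'i set" and Q :: "('i \<Rightarrow> nat) \<Rightarrow> bool"
  defines "M \<equiv> (\<lambda>x. measure_pmf (pmf_of_set (A x)))"
  assumes fin: "finite F" and FI: "F \<subseteq> I"
    and Afin: "\<And>x. finite (A x)" and Ane: "\<And>x. A x \<noteq> {}"
    and dep: "\<And>\<omega> \<omega>'. (\<forall>x\<in>F. \<omega> x = \<omega>' x) \<Longrightarrow> Q \<omega> = Q \<omega>'"
  shows "measure (PiM I M) {\<omega>\<in>space (PiM I M). Q \<omega>}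
         = real (card {\<sigma>\<in>PiE F A. Q \<sigma>}) / real (card (PiE F A))"
proof -
  interpret product_prob_space M I
    unfolding M_def by unfold_locales
  let ?S = "space (PiM I M)"
  define R where "R \<sigma> = {\<omega>\<in>?S. \<forall>x\<in>F. \<omega> x \<in> {\<sigma> x}}" for \<sigma> :: "'i \<Rightarrow> nat"
  define G where "G = {\<sigma>\<in>PiE F A. Q \<sigma>}"
  define GU where "GU = {\<sigma>\<in>PiE F (\<lambda>_. UNIV::nat set). Q \<sigma>}"
  define N where "N = (\<Union>x\<in>F. {\<omega>\<in>?S. \<forall>y\<in>{x}. \<omega> y \<in> UNIV - A x})"
  have sR: "R \<sigma> \<in> sets (PiM I M)" for \<sigma>
    unfolding R_def
    by (rule sets.sets_Collect_finite_All[OF _ fin]) (use FI in \<open>auto intro!: sets_Collect_single simp: M_def\<close>)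
  have mR: "measure (PiM I M) (R \<sigma>) = (\<Prod>x\<in>F. measure (M x) {\<sigma> x})" for \<sigma>
  proof -
    have "emeasure (PiM I M) (R \<sigma>) = (\<Prod>x\<in>F. emeasure (M x) {\<sigma> x})"
      unfolding R_def using emeasure_PiM_Collect[OF FI fin, of "\<lambda>x. {\<sigma> x}"] by (simp add: M_def)
    also have "\<dots> = ennreal (\<Prod>x\<in>F. measure (M x) {\<sigma> x})"
      by (simp add: M_def measure_pmf.emeasure_eq_measure prod_ennreal)
    finally show ?thesis by (simp add: measure_def prod_nonneg)
  qed
  have mR2: "measure (PiM I M) (R \<sigma>) = 1 / real (card (PiE F A))" if "\<sigma> \<in> PiE F A" for \<sigma>
  proof -
    have "measure (PiM I M) (R \<sigma>) = (\<Prod>x\<in>F. 1 / real (card (A x)))"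
      unfolding mR using that Afin Ane
      by (intro prod.cong refl) (auto simp: M_def measure_pmf_of_set PiE_iff)
    also have "\<dots> = 1 / real (card (PiE F A))"
      by (simp add: card_PiE[OF fin] prod_dividef)
    finally show ?thesis .
  qed
  have sN: "N \<in> sets (PiM I M)"
    unfolding N_def using fin FI
    by (intro sets.finite_UN) (auto intro!: sets_Collect_single simp: M_def)
  have mN: "measure (PiM I M) N = 0"
  proof -
    have "measure (PiM I M) N \<le> (\<Sum>x\<in>F. measure (PiM I M) {\<omega>\<in>?S. \<forall>y\<in>{x}. \<omega> y \<in> UNIV - A x})"
      unfolding N_def using fin
      by (intro finite_measure_subadditive_finite) (use FI in \<open>auto intro!: sets_Collect_single simp: M_def\<close>)
    also have "\<dots> = 0"
    proof (intro sum.neutral ballI)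
      fix x assume x: "x \<in> F"
      have "measure (PiM I M) {\<omega>\<in>?S. \<forall>y\<in>{x}. \<omega> y \<in> UNIV - A x} = (\<Prod>y\<in>{x}. measure (M y) (UNIV - A x))"
      proof -
        have "emeasure (PiM I M) {\<omega>\<in>?S. \<forall>y\<in>{x}. \<omega> y \<in> UNIV - A x} = (\<Prod>y\<in>{x}. emeasure (M y) (UNIV - A x))"
          using emeasure_PiM_Collect[of "{x}" "\<lambda>_. UNIV - A x"] x FI by (auto simp: M_def)
        also have "\<dots> = ennreal (\<Prod>y\<in>{x}. measure (M y) (UNIV - A x))"
          by (simp add: M_def measure_pmf.emeasure_eq_measure)
        finally show ?thesis by (simp add: measure_def)
      qed
      also have "\<dots> = 0" using Afin Ane
        by (simp add: M_def measure_pmf_of_set)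
      finally show "measure (PiM I M) {\<omega>\<in>?S. \<forall>y\<in>{x}. \<omega> y \<in> UNIV - A x} = 0" .
    qed
    finally show ?thesis using measure_nonneg[of "PiM I M" N] by linarith
  qed
  have E_eq: "{\<omega>\<in>?S. Q \<omega>} = (\<Union>\<sigma>\<in>GU. R \<sigma>)"
  proof safe
    fix \<omega> assume "\<omega> \<in> ?S" "Q \<omega>"
    then show "\<omega> \<in> (\<Union>\<sigma>\<in>GU. R \<sigma>)"
      unfolding GU_def R_def
      by (intro UN_I[of "restrict \<omega> F"]) (auto intro: dep[THEN iffD1, rotated])
  next
    fix \<omega> \<sigma> assume "\<sigma> \<in> GU" "\<omega> \<in> R \<sigma>"
    then show "Q \<omega>" unfolding GU_def R_def by (auto intro: dep[THEN iffD1, rotated])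
  qed (auto simp: R_def)
  have sE: "{\<omega>\<in>?S. Q \<omega>} \<in> sets (PiM I M)"
    unfolding E_eq
  proof (rule sets.countable_UN'')
    show "countable GU" unfolding GU_def
      by (rule countable_subset[OF _ countable_PiE[OF fin]]) auto
  qed (use sR in auto)
  have GUN: "{\<omega>\<in>?S. Q \<omega>} \<subseteq> (\<Union>\<sigma>\<in>G. R \<sigma>) \<union> N"
  proof safe
    fix \<omega> assume w: "\<omega> \<in> ?S" "Q \<omega>" "\<omega> \<notin> N"
    then have "\<forall>x\<in>F. \<omega> x \<in> A x" unfolding N_def by auto
    with w show "\<omega> \<in> (\<Union>\<sigma>\<in>G. R \<sigma>)"
      unfolding G_def R_def
      by (intro UN_I[of "restrict \<omega> F"]) (auto intro: dep[THEN iffD1, rotated])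
  qed
  have GE: "(\<Union>\<sigma>\<in>G. R \<sigma>) \<subseteq> {\<omega>\<in>?S. Q \<omega>}"
    using E_eq unfolding G_def GU_def by (auto simp: PiE_iff)
  have finG: "finite G" unfolding G_def by (rule finite_subset[of _ "PiE F A"]) (auto intro!: finite_PiE fin Afin)
  have sUG: "(\<Union>\<sigma>\<in>G. R \<sigma>) \<in> sets (PiM I M)" using finG sR by auto
  have mUG: "measure (PiM I M) (\<Union>\<sigma>\<in>G. R \<sigma>) = (\<Sum>\<sigma>\<in>G. measure (PiM I M) (R \<sigma>))"
  proof (rule finite_measure_finite_Union[OF finG])
    show "disjoint_family_on R G"
      unfolding disjoint_family_on_def R_def G_def
      by (auto simp: PiE_iff fun_eq_iff) (metis extensional_arb)
  qed (use sR in auto)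
  also have "\<dots> = real (card G) / real (card (PiE F A))"
    using mR2 by (simp add: G_def)
  finally have mUG: "measure (PiM I M) (\<Union>\<sigma>\<in>G. R \<sigma>) = real (card G) / real (card (PiE F A))" .
  have "measure (PiM I M) {\<omega>\<in>?S. Q \<omega>} \<le> measure (PiM I M) ((\<Union>\<sigma>\<in>G. R \<sigma>) \<union> N)"
    by (intro finite_measure_mono GUN) (use sUG sN in auto)
  also have "\<dots> \<le> measure (PiM I M) (\<Union>\<sigma>\<in>G. R \<sigma>) + measure (PiM I M) N"
    by (intro measure_subadditive sUG sN) auto
  finally have le: "measure (PiM I M) {\<omega>\<in>?S. Q \<omega>} \<le> measure (PiM I M) (\<Union>\<sigma>\<in>G. R \<sigma>)"
    using mN by simp
  have ge: "measure (PiM I M) (\<Union>\<sigma>\<in>G. R \<sigma>) \<le> measure (PiM I M) {\<omega>\<in>?S. Q \<omega>}"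
    by (intro finite_measure_mono GE sE)
  show ?thesis using le ge mUG G_def by simp
qed

definition ee :: "nat \<Rightarrow> nat \<Rightarrow> complex" where
  "ee b n = cis (2 * pi * real n / real b)"

lemma ee_add: "ee b (x + y) = ee b x * ee b y"
  unfolding ee_def by (simp add: cis_mult add_divide_distrib ring_distribs)

lemma ee_0 [simp]: "ee b 0 = 1"
  unfolding ee_def by simp

lemma ee_sum: "ee b (\<Sum>i\<in>A. f i) = (\<Prod>i\<in>A. ee b (f i))"
  by (induction A rule: infinite_finite_induct) (auto simp: ee_add)

lemma ee_mult_pow: "ee b (c * g) = ee b g ^ c"
  by (induction c) (auto simp: ee_add)

lemma ee_dvd: assumes "b > 0" "b dvd n" shows "ee b n = 1"
proof -
  obtain q where n: "n = b * q" using assms by auto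
  have "ee b n = cis (2 * pi * real q)"
    using assms unfolding ee_def n by (simp add: field_simps)
  also have "\<dots> = 1" by (rule cis_multiple_2pi) simp
  finally show ?thesis .
qed

lemma ee_eq_1: assumes "b > 0" "ee b n = 1" shows "b dvd n"
proof -
  have "cos (2 * pi * real n / real b) = 1"
    using assms(2) unfolding ee_def by (simp add: complex_eq_iff)
  then obtain q :: int where q: "2 * pi * real n / real b = real_of_int q * 2 * pi"
    by (subst (asm) cos_one_2pi_int) blast
  hence "real n = real_of_int q * real b" using assms(1)
    by (simp add: field_simps)
  hence "int n = q * int b" by (metis of_int_eq_iff of_int_mult of_int_of_nat_eq)
  hence "int b dvd int n" by simp
  thus ?thesis by simp
qed

lemma sum_ee: assumes "b > 0"
  shows "(\<Sum>c<b. ee b (c * g)) = (if b dvd g then of_nat b else 0)"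
proof (cases "b dvd g")
  case True
  then show ?thesis using assms by (simp add: ee_dvd)
next
  case False
  define \<omega> where "\<omega> = ee b g"
  have ne: "\<omega> \<noteq> 1" using ee_eq_1[OF assms] False unfolding \<omega>_def by blast
  have "(\<Sum>c<b. ee b (c * g)) = (\<Sum>c<b. \<omega> ^ c)" by (simp add: ee_mult_pow \<omega>_def)
  also have "\<dots> = (\<omega> ^ b - 1) / (\<omega> - 1)" using ne by (rule geometric_sum)
  also have "\<omega> ^ b = 1" unfolding \<omega>_def ee_mult_pow[symmetric] using assms by (simp add: ee_dvd)
  finally show ?thesis using False by simp
qed

definition fac :: "nat \<Rightarrow> bool \<Rightarrow> nat \<Rightarrow> real" where
  "fac b z g = (if z then (if b dvd g then real b - 1 else -1) else (if b dvd g then real b else 0))"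

lemma sum_ee_A: assumes "b > 0"
  shows "(\<Sum>a\<in>(if z then {1..<b} else {0..<b}). ee b (a * g)) = of_real (fac b z g)"
proof (cases z)
  case False
  then show ?thesis using sum_ee[OF assms, of g] by (simp add: fac_def atLeast0LessThan)
next
  case True
  have "{..<b} = insert 0 {1..<b}" using assms by auto
  hence "(\<Sum>a\<in>{1..<b}. ee b (a * g)) = (\<Sum>c<b. ee b (c * g)) - 1" by simp
  then show ?thesis using sum_ee[OF assms, of g] True by (simp add: fac_def)
qed

lemma indicator_fourier:
  assumes b: "b > 0"
  shows "(of_nat (b ^ m) * (if (\<forall>r<m. v r mod b = 0) then 1 else 0) :: complex) =
         (\<Sum>\<kappa>\<in>PiE {..<m} (\<lambda>_. {..<b}). \<Prod>r<m. ee b (\<kappa> r * v r))"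
proof -
  have "(of_nat (b ^ m) * (if (\<forall>r<m. v r mod b = 0) then 1 else 0) :: complex) =
        (\<Prod>r<m. (if b dvd v r then of_nat b else 0))"
  proof (cases "\<forall>r<m. v r mod b = 0")
    case True
    then show ?thesis by (simp add: dvd_eq_mod_eq_0)
  next
    case False
    then obtain r where "r < m" "\<not> b dvd v r" by (auto simp: dvd_eq_mod_eq_0)
    then have P0: "(\<Prod>r<m. (if b dvd v r then of_nat b else 0)) = (0::complex)"
      by (intro prod_zero) auto
    have L: "(of_nat (b ^ m) * (if (\<forall>r<m. v r mod b = 0) then 1 else 0) :: complex) = 0"
      by (simp only: if_not_P[OF False] mult_zero_right)
    show ?thesis using P0 L by metis
  qed
  also have "\<dots> = (\<Prod>r<m. \<Sum>c<b. ee b (c * v r))"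
    by (simp add: sum_ee[OF b])
  also have "\<dots> = (\<Sum>\<kappa>\<in>PiE {..<m} (\<lambda>_. {..<b}). \<Prod>r<m. ee b (\<kappa> r * v r))"
    by (rule prod_sum_PiE) auto
  finally show ?thesis .
qed

lemma fourier_count:
  fixes F :: "'i set" and nz :: "'i \<Rightarrow> bool" and w :: "'i \<Rightarrow> nat \<Rightarrow> nat"
  assumes b: "b > 0" and fin: "finite F"
  shows "real (b ^ m) * real (card {\<sigma>\<in>PiE F (\<lambda>x. if nz x then {1..<b} else {0..<b}).
              \<forall>r<m. (\<Sum>x\<in>F. \<sigma> x * w x r) mod b = 0}) =
    (\<Sum>\<kappa>\<in>PiE {..<m} (\<lambda>_. {..<b}). \<Prod>x\<in>F. fac b (nz x) (\<Sum>r<m. \<kappa> r * w x r))"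
proof -
  define A where "A = (\<lambda>x. if nz x then {1..<b} else {0..<b::nat})"
  define K where "K = PiE {..<m} (\<lambda>_. {..<b::nat})"
  define g where "g \<kappa> x = (\<Sum>r<m. \<kappa> r * w x r)" for \<kappa> x
  define P where "P \<sigma> = (\<forall>r<m. (\<Sum>x\<in>F. \<sigma> x * w x r) mod b = 0)" for \<sigma>
  have finO: "finite (PiE F A)" using fin by (auto simp: A_def intro!: finite_PiE)
  have finK: "finite K" by (auto simp: K_def intro!: finite_PiE)
  have key: "(of_nat (b ^ m) * (if P \<sigma> then 1 else 0) :: complex) =
         (\<Sum>\<kappa>\<in>K. \<Prod>x\<in>F. ee b (\<sigma> x * g \<kappa> x))" for \<sigma>
  proof -
    have "(of_nat (b ^ m) * (if P \<sigma> then 1 else 0) :: complex) =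
         (\<Sum>\<kappa>\<in>K. \<Prod>r<m. ee b (\<kappa> r * (\<Sum>x\<in>F. \<sigma> x * w x r)))"
      unfolding P_def K_def by (rule indicator_fourier[OF b])
    also have "\<dots> = (\<Sum>\<kappa>\<in>K. \<Prod>x\<in>F. ee b (\<sigma> x * g \<kappa> x))"
    proof (intro sum.cong refl)
      fix \<kappa>
      have "(\<Sum>r<m. \<kappa> r * (\<Sum>x\<in>F. \<sigma> x * w x r)) = (\<Sum>x\<in>F. \<sigma> x * g \<kappa> x)"
        unfolding g_def sum_distrib_left by (subst sum.swap) (simp add: mult_ac)
      then show "(\<Prod>r<m. ee b (\<kappa> r * (\<Sum>x\<in>F. \<sigma> x * w x r))) = (\<Prod>x\<in>F. ee b (\<sigma> x * g \<kappa> x))"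
        by (simp add: ee_sum[symmetric])
    qed
    finally show ?thesis .
  qed
  have "(of_nat (b ^ m) * of_nat (card {\<sigma>\<in>PiE F A. P \<sigma>}) :: complex)
      = (\<Sum>\<sigma>\<in>PiE F A. of_nat (b ^ m) * (if P \<sigma> then 1 else 0))"
    using finO by (simp add: sum_distrib_left[symmetric] sum.If_cases Int_def conj_commute)
  also have "\<dots> = (\<Sum>\<sigma>\<in>PiE F A. \<Sum>\<kappa>\<in>K. \<Prod>x\<in>F. ee b (\<sigma> x * g \<kappa> x))"
    by (intro sum.cong refl key)
  also have "\<dots> = (\<Sum>\<kappa>\<in>K. \<Sum>\<sigma>\<in>PiE F A. \<Prod>x\<in>F. ee b (\<sigma> x * g \<kappa> x))"
    by (rule sum.swap)
  also have "\<dots> = (\<Sum>\<kappa>\<in>K. \<Prod>x\<in>F. \<Sum>a\<in>A x. ee b (a * g \<kappa> x))"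
    by (intro sum.cong refl prod_sum_PiE[symmetric] fin) (auto simp: A_def)
  also have "\<dots> = (\<Sum>\<kappa>\<in>K. \<Prod>x\<in>F. of_real (fac b (nz x) (g \<kappa> x)))"
    unfolding A_def by (intro sum.cong prod.cong refl sum_ee_A[OF b])
  also have "\<dots> = of_real (\<Sum>\<kappa>\<in>K. \<Prod>x\<in>F. fac b (nz x) (g \<kappa> x))"
    by simp
  finally have "complex_of_real (real (b ^ m) * real (card {\<sigma>\<in>PiE F A. P \<sigma>})) =
     of_real (\<Sum>\<kappa>\<in>K. \<Prod>x\<in>F. fac b (nz x) (g \<kappa> x))" by simp
  then have "real (b ^ m) * real (card {\<sigma>\<in>PiE F A. P \<sigma>}) = (\<Sum>\<kappa>\<in>K. \<Prod>x\<in>F. fac b (nz x) (g \<kappa> x))"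
    using of_real_eq_iff by blast
  then show ?thesis unfolding A_def K_def g_def P_def .
qed

lemma digit_lt: "b > 0 \<Longrightarrow> digit b k i < b"
  unfolding digit_def by simp

lemma digit_expansion: "b > 0 \<Longrightarrow> k mod b ^ m = (\<Sum>i<m. digit b k i * b ^ i)"
proof (induction m)
  case 0 then show ?case by simp
next
  case (Suc m)
  have "k mod b ^ Suc m = k mod (b ^ m * b)" by (simp add: mult.commute)
  also have "\<dots> = b ^ m * (k div b ^ m mod b) + k mod b ^ m" by (rule mod_mult2_eq)
  finally show ?case using Suc by (simp add: digit_def mult.commute)
qed

lemma digit_high_zero: "b > 0 \<Longrightarrow> k < b ^ N \<Longrightarrow> N \<le> i \<Longrightarrow> digit b k i = 0"
proof -
  assume b: "b > 0" and k: "k < b ^ N" and i: "N \<le> i"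
  have "b ^ N \<le> b ^ i" using b i by (simp add: power_increasing)
  then have "k div b ^ i = 0" using k by simp
  then show ?thesis by (simp add: digit_def)
qed

definition Kset :: "nat \<Rightarrow> nat \<Rightarrow> (nat \<Rightarrow> nat) set" where
  "Kset b m = PiE {..<m} (\<lambda>_. {..<b})"

lemma bij_digits:
  assumes b: "b > 0"
  shows "bij_betw (\<lambda>k. restrict (digit b k) {..<m}) {..<b ^ m} (Kset b m)"
proof -
  have inj: "inj_on (\<lambda>k. restrict (digit b k) {..<m}) {..<b ^ m}"
  proof (rule inj_onI)
    fix x y assume x: "x \<in> {..<b^m}" and y: "y \<in> {..<b^m}"
      and eq: "restrict (digit b x) {..<m} = restrict (digit b y) {..<m}"
    have "\<forall>i<m. digit b x i = digit b y i" using eq by (metis lessThan_iff restrict_apply')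
    then have "x mod b ^ m = y mod b ^ m" using digit_expansion[OF b] by simp
    then show "x = y" using x y by simp
  qed
  have sub: "(\<lambda>k. restrict (digit b k) {..<m}) ` {..<b ^ m} \<subseteq> Kset b m"
  proof
    fix \<kappa> assume "\<kappa> \<in> (\<lambda>k. restrict (digit b k) {..<m}) ` {..<b ^ m}"
    then obtain k where "\<kappa> = restrict (digit b k) {..<m}" by auto
    then show "\<kappa> \<in> Kset b m" unfolding Kset_def
      by (simp only: restrict_PiE_iff) (simp add: digit_lt[OF b])
  qed
  have "card ((\<lambda>k. restrict (digit b k) {..<m}) ` {..<b ^ m}) = card (Kset b m)"
    using card_image[OF inj] by (simp add: Kset_def card_PiE)
  then have "(\<lambda>k. restrict (digit b k) {..<m}) ` {..<b ^ m} = Kset b m"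
    using sub by (intro card_subset_eq) (auto simp: Kset_def intro!: finite_PiE)
  then show ?thesis using inj by (simp add: bij_betw_def)
qed

lemma card_digits_transfer:
  assumes b: "b > 0"
    and dep: "\<And>k. P (digit b k) = P (restrict (digit b k) {..<m})"
  shows "card {k. k < b ^ m \<and> P (digit b k)} = card {\<kappa>\<in>Kset b m. P \<kappa>}"
proof -
  let ?f = "\<lambda>k. restrict (digit b k) {..<m}"
  have bij: "bij_betw ?f {..<b ^ m} (Kset b m)" by (rule bij_digits[OF b])
  have "bij_betw ?f {k. k < b ^ m \<and> P (digit b k)} {\<kappa>\<in>Kset b m. P \<kappa>}"
  proof -
    have "?f ` {k. k < b ^ m \<and> P (digit b k)} = {\<kappa>\<in>Kset b m. P \<kappa>}"
    proof safe
      fix k assume "k < b ^ m" "P (digit b k)"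
      then show "?f k \<in> Kset b m" "P (?f k)" using bij dep by (auto simp: bij_betw_def)
    next
      fix \<kappa> assume "\<kappa> \<in> Kset b m" "P \<kappa>"
      then obtain k where "k < b ^ m" "\<kappa> = ?f k" using bij by (auto simp: bij_betw_def)
      then show "\<kappa> \<in> ?f ` {k. k < b ^ m \<and> P (digit b k)}" using \<open>P \<kappa>\<close> dep by auto
    qed
    moreover have "inj_on ?f {k. k < b ^ m \<and> P (digit b k)}"
      using bij by (auto simp: bij_betw_def intro: inj_on_subset)
    ultimately show ?thesis by (simp add: bij_betw_def)
  qed
  then show ?thesis by (rule bij_betw_same_card)
qed

fun tr :: "nat \<Rightarrow> (nat \<Rightarrow> nat) \<Rightarrow> nat \<Rightarrow> nat" where
  "tr b \<delta> 0 = 0"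
| "tr b \<delta> (Suc a) = tr b \<delta> a * b + \<delta> a"

lemma tr_cong: "(\<And>i. i < a \<Longrightarrow> \<delta> i = \<epsilon> i) \<Longrightarrow> tr b \<delta> a = tr b \<epsilon> a"
  by (induction a) auto

lemma tr_lt: assumes "\<And>i. i < a \<Longrightarrow> \<delta> i < b" shows "tr b \<delta> a < b ^ a"
  using assms
proof (induction a)
  case 0 then show ?case by simp
next
  case (Suc a)
  have "tr b \<delta> a + 1 \<le> b ^ a" using Suc by fastforce
  then have "(tr b \<delta> a + 1) * b \<le> b ^ a * b" by (rule mult_le_mono1)
  moreover have "\<delta> a < b" using Suc by simp
  ultimately show ?case by (simp add: algebra_simps)
qed

lemma tr_real: "(\<Sum>i<m. real (\<delta> i) / real b ^ Suc i) = real (tr b \<delta> m) / real b ^ m" if "b > 0"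
proof (induction m)
  case 0 then show ?case by simp
next
  case (Suc m)
  then show ?case using that by (simp add: field_simps)
qed

lemma tr_split:
  assumes "a \<le> m" "\<And>i. i < m \<Longrightarrow> \<delta> i < b"
  shows "\<exists>R < b ^ (m - a). tr b \<delta> m = tr b \<delta> a * b ^ (m - a) + R"
  using assms
proof (induction m rule: dec_induct)
  case base then show ?case by auto
next
  case (step m)
  then obtain R where R: "R < b ^ (m - a)" "tr b \<delta> m = tr b \<delta> a * b ^ (m - a) + R" by auto
  have d: "\<delta> m < b" using step by simp
  have "tr b \<delta> (Suc m) = tr b \<delta> a * b ^ (Suc m - a) + (R * b + \<delta> m)"
    using R step(1) by (simp add: Suc_diff_le algebra_simps)
  moreover have "R * b + \<delta> m < b ^ (Suc m - a)"
  proof -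
    have "(R + 1) * b \<le> b ^ (m - a) * b" using R by (intro mult_right_mono) auto
    then show ?thesis using d step(1) by (simp add: Suc_diff_le algebra_simps)
  qed
  ultimately show ?case by blast
qed

lemma nat_interval_unique:
  fixes T R c B :: nat
  assumes "R < B"
  shows "(c * B \<le> T * B + R \<and> T * B + R < (c + 1) * B) \<longleftrightarrow> T = c"
proof
  assume h: "c * B \<le> T * B + R \<and> T * B + R < (c + 1) * B"
  show "T = c"
  proof (rule ccontr)
    assume "T \<noteq> c"
    then consider "T < c" | "c < T" by linarith
    then show False
    proof cases
      case 1
      then have "(T + 1) * B \<le> c * B" by (intro mult_right_mono) auto
      then show False using h assms by (simp add: algebra_simps)
    next
      case 2
      then have "(c + 1) * B \<le> T * B" by (intro mult_right_mono) auto
      then show False using h by linarith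
    qed
  qed
qed (use assms in auto)

lemma interval_iff_tr:
  assumes b: "b > 0" and am: "a \<le> m" and \<delta>: "\<And>i. i < m \<Longrightarrow> \<delta> i < b"
  shows "(real c / real b ^ a \<le> (\<Sum>i<m. real (\<delta> i) / real b ^ Suc i) \<and>
          (\<Sum>i<m. real (\<delta> i) / real b ^ Suc i) < real (c + 1) / real b ^ a) \<longleftrightarrow> tr b \<delta> a = c"
proof -
  obtain R where R: "R < b ^ (m - a)" "tr b \<delta> m = tr b \<delta> a * b ^ (m - a) + R"
    using tr_split[of a m \<delta> b] am \<delta> by blast
  define B where "B = b ^ (m - a)"
  have bm: "real b ^ m = real b ^ a * real B"
    unfolding B_def using am by (simp add: power_add[symmetric])
  have pos: "real b ^ a > 0" "real B > 0" using b by (auto simp: B_def)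
  have bm0: "real b ^ m > 0" using b by simp
  have e1: "real c / real b ^ a = real (c * B) / real b ^ m"
    unfolding bm using pos by simp
  have e2: "real (c + 1) / real b ^ a = real ((c + 1) * B) / real b ^ m"
  proof -
    have "real ((c + 1) * B) / real b ^ m = (real (c+1) * real B) / (real b ^ a * real B)"
      by (simp only: bm of_nat_mult)
    also have "\<dots> = real (c+1) / real b ^ a"
      by (rule mult_divide_mult_cancel_right) (use pos in simp)
    finally show ?thesis by simp
  qed
  have "real c / real b ^ a \<le> real (tr b \<delta> m) / real b ^ m \<longleftrightarrow> real (c * B) \<le> real (tr b \<delta> m)"
    unfolding e1 using bm0 by (simp add: divide_le_cancel)
  moreover have "real (tr b \<delta> m) / real b ^ m < real (c + 1) / real b ^ a \<longleftrightarrow> real (tr b \<delta> m) < real ((c + 1) * B)"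
    unfolding e2 using bm0 by (simp add: divide_less_cancel del: of_nat_add of_nat_mult)
  ultimately have "(real c / real b ^ a \<le> real (tr b \<delta> m) / real b ^ m \<and>
          real (tr b \<delta> m) / real b ^ m < real (c + 1) / real b ^ a) \<longleftrightarrow>
       (c * B \<le> tr b \<delta> a * B + R \<and> tr b \<delta> a * B + R < (c + 1) * B)"
    using R unfolding B_def of_nat_le_iff of_nat_less_iff by simp
  also have "\<dots> \<longleftrightarrow> tr b \<delta> a = c"
    using R unfolding B_def by (intro nat_interval_unique)
  finally show ?thesis using tr_real[OF b] by simp
qed

lemma tr_inj:
  assumes "\<And>i. i < a \<Longrightarrow> \<delta> i < b" "\<And>i. i < a \<Longrightarrow> \<epsilon> i < b" "tr b \<delta> a = tr b \<epsilon> a"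
  shows "\<forall>i<a. \<delta> i = \<epsilon> i"
  using assms
proof (induction a)
  case 0 then show ?case by simp
next
  case (Suc a)
  have d: "\<delta> a < b" "\<epsilon> a < b" using Suc by auto
  have eq: "tr b \<delta> a * b + \<delta> a = tr b \<epsilon> a * b + \<epsilon> a" using Suc by simp
  then have "(tr b \<delta> a * b + \<delta> a) mod b = (tr b \<epsilon> a * b + \<epsilon> a) mod b" by simp
  then have e1: "\<delta> a = \<epsilon> a" using d by simp
  then have "tr b \<delta> a * b = tr b \<epsilon> a * b" using eq by simp
  then have "tr b \<delta> a = tr b \<epsilon> a" using d by simp
  then have "\<forall>i<a. \<delta> i = \<epsilon> i" using Suc by auto
  then show ?case using e1 less_Suc_eq by auto
qed

definition zz :: "nat \<Rightarrow> nat \<Rightarrow> (nat \<Rightarrow> nat \<Rightarrow> nat \<Rightarrow> nat) \<Rightarrow> nat \<Rightarrow> nat \<Rightarrow> (nat \<Rightarrow> nat) \<Rightarrow> nat" where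
  "zz b m C j i \<kappa> = (\<Sum>l<m. C j i l * \<kappa> l) mod b"

lemma net_count:
  assumes b: "b > 1" and net: "is_net b t m u (net_point b m C)"
    and fu: "finite u"
    and asum: "(\<Sum>j\<in>u. a j) + t = m"
    and e: "\<And>j i. j \<in> u \<Longrightarrow> i < a j \<Longrightarrow> e j i < b"
  shows "card {\<kappa>\<in>Kset b m. \<forall>j\<in>u. \<forall>i<a j. zz b m C j i \<kappa> = e j i} = b ^ t"
proof -
  define c where "c j = tr b (e j) (a j)" for j
  have am: "a j \<le> m" if "j \<in> u" for j
    using member_le_sum[OF that, of a, OF _ fu] asum by auto
  have c: "\<forall>j\<in>u. c j < b ^ a j" unfolding c_def using e by (auto intro!: tr_lt)
  have np: "net_point b m C k j = (\<Sum>i<m. real (zz b m C j i (digit b k)) / real b ^ Suc i)" for k j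
    unfolding net_point_def zz_def ..
  have "card {k. k < b ^ m \<and> (\<forall>j\<in>u. real (c j) / real b ^ a j \<le> net_point b m C k j
                                   \<and> net_point b m C k j < real (c j + 1) / real b ^ a j)} = b ^ t"
    using net asum c unfolding is_net_def by blast
  also have "{k. k < b ^ m \<and> (\<forall>j\<in>u. real (c j) / real b ^ a j \<le> net_point b m C k j
                                   \<and> net_point b m C k j < real (c j + 1) / real b ^ a j)}
     = {k. k < b ^ m \<and> (\<lambda>\<kappa>. \<forall>j\<in>u. \<forall>i<a j. zz b m C j i \<kappa> = e j i) (digit b k)}"
  proof -
    have "(real (c j) / real b ^ a j \<le> net_point b m C k j
                                   \<and> net_point b m C k j < real (c j + 1) / real b ^ a j)
          \<longleftrightarrow> (\<forall>i<a j. zz b m C j i (digit b k) = e j i)" if j: "j \<in> u" for k j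
    proof -
      have "(real (c j) / real b ^ a j \<le> net_point b m C k j
                                   \<and> net_point b m C k j < real (c j + 1) / real b ^ a j)
            \<longleftrightarrow> tr b (\<lambda>i. zz b m C j i (digit b k)) (a j) = c j"
        unfolding np using b am[OF j] by (intro interval_iff_tr) (auto simp: zz_def)
      also have "\<dots> \<longleftrightarrow> (\<forall>i<a j. zz b m C j i (digit b k) = e j i)"
      proof
        assume "tr b (\<lambda>i. zz b m C j i (digit b k)) (a j) = c j"
        then show "\<forall>i<a j. zz b m C j i (digit b k) = e j i"
          unfolding c_def using b e[OF j] by (intro tr_inj) (auto simp: zz_def)
      next
        assume "\<forall>i<a j. zz b m C j i (digit b k) = e j i"
        then show "tr b (\<lambda>i. zz b m C j i (digit b k)) (a j) = c j"
          unfolding c_def by (intro tr_cong) auto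
      qed
      finally show ?thesis .
    qed
    then show ?thesis by auto
  qed
  also have "card {k. k < b ^ m \<and> (\<lambda>\<kappa>. \<forall>j\<in>u. \<forall>i<a j. zz b m C j i \<kappa> = e j i) (digit b k)}
      = card {\<kappa>\<in>Kset b m. \<forall>j\<in>u. \<forall>i<a j. zz b m C j i \<kappa> = e j i}"
    using b by (intro card_digits_transfer) (auto simp: zz_def)
  finally show ?thesis .
qed

definition FF :: "nat \<Rightarrow> nat \<Rightarrow> nat \<Rightarrow> (nat \<times> nat \<times> nat) set" where
  "FF s m N = (SIGMA j:{1..s}. SIGMA i:{..<N}. {l. l < m \<and> l \<le> i})"

definition ww :: "nat \<Rightarrow> (nat \<Rightarrow> nat \<Rightarrow> nat \<Rightarrow> nat) \<Rightarrow> (nat \<Rightarrow> nat) \<Rightarrow> nat \<times> nat \<times> nat \<Rightarrow> nat \<Rightarrow> nat" where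
  "ww b C k x r = (case x of (j, i, l) \<Rightarrow> C j l r * digit b (k j) i)"

lemma finite_FF: "finite (FF s m N)"
  unfolding FF_def by (intro finite_SigmaI) auto

lemma mod_strip1:
  fixes X y :: "'a \<Rightarrow> nat"
  shows "(\<Sum>i\<in>I. (X i mod b) * y i) mod b = (\<Sum>i\<in>I. X i * y i) mod b"
proof -
  have "(\<Sum>i\<in>I. (X i mod b) * y i) mod b = (\<Sum>i\<in>I. (X i mod b) * y i mod b) mod b"
    by (rule mod_sum_eq[symmetric])
  also have "\<dots> = (\<Sum>i\<in>I. X i * y i mod b) mod b" by (simp add: mod_mult_left_eq)
  also have "\<dots> = (\<Sum>i\<in>I. X i * y i) mod b" by (rule mod_sum_eq)
  finally show ?thesis .
qed

lemma mod_sum_cong: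
  fixes f g :: "'a \<Rightarrow> nat"
  assumes "\<And>j. j \<in> J \<Longrightarrow> f j mod b = g j mod b"
  shows "(\<Sum>j\<in>J. f j) mod b = (\<Sum>j\<in>J. g j) mod b"
proof -
  have "(\<Sum>j\<in>J. f j) mod b = (\<Sum>j\<in>J. f j mod b) mod b" by (rule mod_sum_eq[symmetric])
  also have "\<dots> = (\<Sum>j\<in>J. g j mod b) mod b" using assms by simp
  also have "\<dots> = (\<Sum>j\<in>J. g j) mod b" by (rule mod_sum_eq)
  finally show ?thesis .
qed

lemma sum_Sigma3:
  assumes "finite A" "\<And>a. a \<in> A \<Longrightarrow> finite (B a)" "\<And>a b. finite (Cc a b)"
  shows "(\<Sum>a\<in>A. \<Sum>b\<in>B a. \<Sum>c\<in>Cc a b. f (a, b, c)) = (\<Sum>x\<in>(SIGMA a:A. SIGMA b:B a. Cc a b). f x)"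
proof -
  have "(\<Sum>a\<in>A. \<Sum>b\<in>B a. \<Sum>c\<in>Cc a b. f (a, b, c)) = (\<Sum>a\<in>A. \<Sum>p\<in>Sigma (B a) (Cc a). f (a, fst p, snd p))"
  proof (rule sum.cong[OF refl])
    fix a assume "a \<in> A"
    then show "(\<Sum>b\<in>B a. \<Sum>c\<in>Cc a b. f (a, b, c)) = (\<Sum>p\<in>Sigma (B a) (Cc a). f (a, fst p, snd p))"
      using assms by (subst sum.Sigma) (auto simp: split_def)
  qed
  also have "\<dots> = (\<Sum>q\<in>(SIGMA a:A. Sigma (B a) (Cc a)). f (fst q, fst (snd q), snd (snd q)))"
    using assms by (subst sum.Sigma) (auto simp: split_def intro!: finite_SigmaI)
  finally show ?thesis by simp
qed

lemma dual_iff: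
  assumes b: "b > 0" and kN: "\<forall>j\<in>{1..s}. k j < b ^ N"
  shows "in_dual b m s (\<lambda>j. mat_prod b m (L_of m \<omega> j) (C j)) k \<longleftrightarrow>
         (\<forall>r<m. (\<Sum>x\<in>FF s m N. \<omega> x * ww b C k x r) mod b = 0)"
proof -
  have eq: "(\<Sum>j\<in>{1..s}. \<Sum>i\<in>{i. digit b (k j) i \<noteq> 0}. mat_prod b m (L_of m \<omega> j) (C j) i r * digit b (k j) i) mod b
      = (\<Sum>x\<in>FF s m N. \<omega> x * ww b C k x r) mod b" for r
  proof -
    have "(\<Sum>j\<in>{1..s}. \<Sum>i\<in>{i. digit b (k j) i \<noteq> 0}. mat_prod b m (L_of m \<omega> j) (C j) i r * digit b (k j) i) mod b
       = (\<Sum>j\<in>{1..s}. \<Sum>i\<in>{i. digit b (k j) i \<noteq> 0}. (\<Sum>l<m. L_of m \<omega> j i l * C j l r) * digit b (k j) i) mod b"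
      unfolding mat_prod_def by (intro mod_sum_cong mod_strip1)
    also have "(\<Sum>j\<in>{1..s}. \<Sum>i\<in>{i. digit b (k j) i \<noteq> 0}. (\<Sum>l<m. L_of m \<omega> j i l * C j l r) * digit b (k j) i)
       = (\<Sum>j\<in>{1..s}. \<Sum>i\<in>{..<N}. \<Sum>l\<in>{l. l < m \<and> l \<le> i}. \<omega> (j, i, l) * ww b C k (j, i, l) r)"
    proof (rule sum.cong[OF refl])
      fix j assume j: "j \<in> {1..s}"
      have sub: "{i. digit b (k j) i \<noteq> 0} \<subseteq> {..<N}"
      proof
        fix i assume "i \<in> {i. digit b (k j) i \<noteq> 0}"
        then show "i \<in> {..<N}" using digit_high_zero[OF b, of "k j" N i] kN j by force
      qed
      have "(\<Sum>i\<in>{i. digit b (k j) i \<noteq> 0}. (\<Sum>l<m. L_of m \<omega> j i l * C j l r) * digit b (k j) i)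
          = (\<Sum>i\<in>{..<N}. (\<Sum>l<m. L_of m \<omega> j i l * C j l r) * digit b (k j) i)"
        by (intro sum.mono_neutral_left sub) auto
      also have "\<dots> = (\<Sum>i\<in>{..<N}. \<Sum>l\<in>{l. l < m \<and> l \<le> i}. \<omega> (j, i, l) * ww b C k (j, i, l) r)"
      proof (rule sum.cong[OF refl])
        fix i
        have "(\<Sum>l<m. L_of m \<omega> j i l * C j l r) * digit b (k j) i
            = (\<Sum>l<m. if l \<le> i then \<omega> (j, i, l) * ww b C k (j, i, l) r else 0)"
          unfolding sum_distrib_right by (intro sum.cong refl) (auto simp: L_of_def ww_def)
        also have "\<dots> = (\<Sum>l\<in>{l\<in>{..<m}. l \<le> i}. \<omega> (j, i, l) * ww b C k (j, i, l) r)"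
          by (rule sum.inter_filter[symmetric]) simp
        finally show "(\<Sum>l<m. L_of m \<omega> j i l * C j l r) * digit b (k j) i
            = (\<Sum>l\<in>{l. l < m \<and> l \<le> i}. \<omega> (j, i, l) * ww b C k (j, i, l) r)" by simp
      qed
      finally show "(\<Sum>i\<in>{i. digit b (k j) i \<noteq> 0}. (\<Sum>l<m. L_of m \<omega> j i l * C j l r) * digit b (k j) i)
          = (\<Sum>i\<in>{..<N}. \<Sum>l\<in>{l. l < m \<and> l \<le> i}. \<omega> (j, i, l) * ww b C k (j, i, l) r)" .
    qed
    also have "\<dots> = (\<Sum>x\<in>FF s m N. \<omega> x * ww b C k x r)"
      unfolding FF_def by (rule sum_Sigma3) auto
    finally show ?thesis .
  qed
  show ?thesis unfolding in_dual_def using eq by simp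
qed

definition nzf :: "nat \<times> nat \<times> nat \<Rightarrow> bool" where
  "nzf x = (fst (snd x) = snd (snd x))"

definition AA :: "nat \<Rightarrow> nat \<times> nat \<times> nat \<Rightarrow> nat set" where
  "AA b x = (if nzf x then {1..<b} else {0..<b})"

lemma L_measure_eq: "L_measure b m s = PiM (L_index m s) (\<lambda>x. measure_pmf (pmf_of_set (AA b x)))"
proof -
  have "(\<lambda>(j, i, l). measure_pmf (pmf_of_set (if i = l then {1..<b} else {0..<b})))
        = (\<lambda>x. measure_pmf (pmf_of_set (AA b x)))"
    by (rule ext) (auto simp: AA_def nzf_def split: prod.splits)
  then show ?thesis unfolding L_measure_def by simp
qed

lemma FF_sub: "FF s m N \<subseteq> L_index m s"
  unfolding FF_def L_index_def by auto

lemma Pr_formula: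
  assumes b: "b > 1" and kN: "\<forall>j\<in>{1..s}. k j < b ^ N"
  shows "measure (L_measure b m s)
           {\<omega> \<in> space (L_measure b m s). in_dual b m s (\<lambda>j. mat_prod b m (L_of m \<omega> j) (C j)) k}
       = real (card {\<sigma>\<in>PiE (FF s m N) (AA b). \<forall>r<m. (\<Sum>x\<in>FF s m N. \<sigma> x * ww b C k x r) mod b = 0})
         / real (card (PiE (FF s m N) (AA b)))"
proof -
  have b0: "b > 0" using b by simp
  have "measure (L_measure b m s)
           {\<omega> \<in> space (L_measure b m s). in_dual b m s (\<lambda>j. mat_prod b m (L_of m \<omega> j) (C j)) k}
      = real (card {\<sigma>\<in>PiE (FF s m N) (AA b). in_dual b m s (\<lambda>j. mat_prod b m (L_of m \<sigma> j) (C j)) k})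
         / real (card (PiE (FF s m N) (AA b)))"
    unfolding L_measure_eq
  proof (rule prob_finite_dep[OF finite_FF FF_sub])
    show "finite (AA b x)" for x by (simp add: AA_def)
    show "AA b x \<noteq> {}" for x using b by (auto simp: AA_def)
    fix \<omega> \<omega>' :: "nat \<times> nat \<times> nat \<Rightarrow> nat" assume "\<forall>x\<in>FF s m N. \<omega> x = \<omega>' x"
    then show "in_dual b m s (\<lambda>j. mat_prod b m (L_of m \<omega> j) (C j)) k =
               in_dual b m s (\<lambda>j. mat_prod b m (L_of m \<omega>' j) (C j)) k"
      unfolding dual_iff[OF b0 kN] by simp
  qed
  also have "{\<sigma>\<in>PiE (FF s m N) (AA b). in_dual b m s (\<lambda>j. mat_prod b m (L_of m \<sigma> j) (C j)) k}
     = {\<sigma>\<in>PiE (FF s m N) (AA b). \<forall>r<m. (\<Sum>x\<in>FF s m N. \<sigma> x * ww b C k x r) mod b = 0}"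
    unfolding dual_iff[OF b0 kN] ..
  finally show ?thesis .
qed

lemma nonsing_kernel:
  assumes ns: "nonsingular b m C" and b: "b > 0"
    and \<kappa>: "\<And>r. r < m \<Longrightarrow> \<kappa> r < b"
    and z: "\<forall>l<m. b dvd (\<Sum>r<m. C l r * \<kappa> r)"
  shows "\<forall>i<m. \<kappa> i = 0"
proof (intro allI impI)
  fix i assume i: "i < m"
  obtain B where B: "\<forall>i<m. \<forall>r<m. (\<Sum>l<m. B i l * C l r) mod b = (if i = r then 1 else 0)"
    using ns unfolding nonsingular_def by blast
  have "(\<Sum>r<m. (if i = r then 1 else 0) * \<kappa> r) = (\<Sum>r<m. if i = r then \<kappa> r else 0)"
    by (intro sum.cong) auto
  also have "\<dots> = \<kappa> i" using i by (simp add: sum.delta)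
  finally have "\<kappa> i = (\<Sum>r<m. (if i = r then 1 else 0) * \<kappa> r) mod b"
    using \<kappa>[OF i] by simp
  also have "\<dots> = (\<Sum>r<m. ((\<Sum>l<m. B i l * C l r) mod b) * \<kappa> r) mod b"
    using B i by (intro arg_cong[where f="\<lambda>x. x mod b"] sum.cong) auto
  also have "\<dots> = (\<Sum>r<m. (\<Sum>l<m. B i l * C l r) * \<kappa> r) mod b"
    by (rule mod_strip1)
  also have "(\<Sum>r<m. (\<Sum>l<m. B i l * C l r) * \<kappa> r) = (\<Sum>l<m. B i l * (\<Sum>r<m. C l r * \<kappa> r))"
  proof -
    have "(\<Sum>r<m. (\<Sum>l<m. B i l * C l r) * \<kappa> r) = (\<Sum>r<m. \<Sum>l<m. B i l * C l r * \<kappa> r)"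
      by (simp add: sum_distrib_right)
    also have "\<dots> = (\<Sum>l<m. \<Sum>r<m. B i l * C l r * \<kappa> r)" by (rule sum.swap)
    also have "\<dots> = (\<Sum>l<m. B i l * (\<Sum>r<m. C l r * \<kappa> r))"
      by (simp add: sum_distrib_left mult.assoc)
    finally show ?thesis .
  qed
  also have "b dvd \<dots>" using z by (auto intro!: dvd_sum)
  then have "(\<Sum>l<m. B i l * (\<Sum>r<m. C l r * \<kappa> r)) mod b = 0" by simp
  finally show "\<kappa> i = 0" .
qed

lemma high_digit_exists:
  assumes b: "b > 1" and k: "b ^ m \<le> k"
  shows "\<exists>i. m \<le> i \<and> digit b k i \<noteq> 0"
proof (rule ccontr)
  assume "\<not> ?thesis"
  then have z: "\<And>i. m \<le> i \<Longrightarrow> digit b k i = 0" by auto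
  have "k < 2 ^ k" by (rule less_exp)
  also have "\<dots> \<le> b ^ k" using b by (intro power_mono) auto
  also have "\<dots> \<le> b ^ (k + m)" using b by (intro power_increasing) auto
  finally have kN: "k < b ^ (k + m)" .
  have "k = k mod b ^ (k + m)" using kN by simp
  also have "\<dots> = (\<Sum>i<k+m. digit b k i * b ^ i)" using b by (simp add: digit_expansion)
  also have "\<dots> = (\<Sum>i<m. digit b k i * b ^ i)"
    by (rule sum.mono_neutral_right) (auto simp: z)
  also have "\<dots> = k mod b ^ m" using b by (simp add: digit_expansion)
  also have "\<dots> < b ^ m" using b by simp
  finally show False using k by simp
qed

lemma case2:
  assumes pb: "prime b" and j1: "j1 \<in> {1..s}" and kj1: "b ^ m \<le> k j1"
    and ns: "\<forall>j\<in>{1..s}. nonsingular b m (C j)"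
  shows "measure (L_measure b m s)
           {\<omega> \<in> space (L_measure b m s). in_dual b m s (\<lambda>j. mat_prod b m (L_of m \<omega> j) (C j)) k}
         = 1 / real b ^ m"
proof -
  have b: "b > 1" using prime_gt_1_nat[OF pb] .
  have b0: "b > 0" using b by simp
  define N where "N = (\<Sum>j\<in>{1..s}. k j) + m + 1"
  have kN: "\<forall>j\<in>{1..s}. k j < b ^ N"
  proof
    fix j assume j: "j \<in> {1..s}"
    have "k j \<le> (\<Sum>j\<in>{1..s}. k j)" by (rule member_le_sum) (use j in auto)
    also have "\<dots> < N" unfolding N_def by simp
    also have "N < 2 ^ N" by (rule less_exp)
    also have "\<dots> \<le> b ^ N" using b by (intro power_mono) auto
    finally show "k j < b ^ N" .
  qed
  obtain i0 where i0: "m \<le> i0" "digit b (k j1) i0 \<noteq> 0"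
    using high_digit_exists[OF b kj1] by blast
  have i0N: "i0 < N"
  proof (rule ccontr)
    assume "\<not> i0 < N"
    then have "digit b (k j1) i0 = 0" using digit_high_zero[OF b0, of "k j1" N i0] kN j1 by simp
    then show False using i0 by simp
  qed
  define F where "F = FF s m N"
  define K where "K = Kset b m"
  define P where "P \<kappa> = (\<Prod>x\<in>F. fac b (nzf x) (\<Sum>r<m. \<kappa> r * ww b C k x r))" for \<kappa>
  define \<kappa>0 where "\<kappa>0 = restrict (\<lambda>_. 0::nat) {..<m}"
  have k0K: "\<kappa>0 \<in> K" using b unfolding K_def Kset_def \<kappa>0_def by auto
  have finK: "finite K" unfolding K_def Kset_def by (auto intro!: finite_PiE)
  have P0: "P \<kappa> = 0" if \<kappa>: "\<kappa> \<in> K - {\<kappa>0}" for \<kappa>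
  proof -
    have "\<exists>r<m. \<kappa> r \<noteq> 0"
    proof (rule ccontr)
      assume "\<not> ?thesis"
      then have "\<kappa> = \<kappa>0" using \<kappa> unfolding K_def Kset_def \<kappa>0_def
        by (auto simp: PiE_iff extensional_def fun_eq_iff)
      then show False using \<kappa> by simp
    qed
    then obtain r0 where r0: "r0 < m" "\<kappa> r0 \<noteq> 0" by blast
    have \<kappa>r: "\<And>r. r < m \<Longrightarrow> \<kappa> r < b" using \<kappa> unfolding K_def Kset_def by auto
    have "\<not> (\<forall>l<m. b dvd (\<Sum>r<m. C j1 l r * \<kappa> r))"
    proof
      assume h: "\<forall>l<m. b dvd (\<Sum>r<m. C j1 l r * \<kappa> r)"
      have "\<forall>i<m. \<kappa> i = 0"
        by (rule nonsing_kernel[where C="C j1", OF ns[rule_format, OF j1] b0]) (use \<kappa>r h in auto)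
      then show False using r0 by auto
    qed
    then obtain l where l: "l < m" "\<not> b dvd (\<Sum>r<m. C j1 l r * \<kappa> r)" by blast
    define x where "x = (j1, i0, l)"
    have xF: "x \<in> F" unfolding x_def F_def FF_def using j1 i0 i0N l by auto
    have nz: "\<not> nzf x" unfolding x_def nzf_def using l i0 by simp
    have g: "(\<Sum>r<m. \<kappa> r * ww b C k x r) = digit b (k j1) i0 * (\<Sum>r<m. C j1 l r * \<kappa> r)"
      unfolding x_def ww_def by (simp add: sum_distrib_left mult_ac)
    have ndk: "\<not> b dvd digit b (k j1) i0"
      using i0(2) digit_lt[OF b0, of "k j1" i0] by (auto dest: dvd_imp_le)
    have "\<not> b dvd (\<Sum>r<m. \<kappa> r * ww b C k x r)"
      unfolding g using pb l(2) ndk by (simp add: prime_dvd_mult_iff)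
    then have "fac b (nzf x) (\<Sum>r<m. \<kappa> r * ww b C k x r) = 0"
      using nz by (simp add: fac_def)
    then show "P \<kappa> = 0" unfolding P_def using xF finite_FF F_def
      by (intro prod_zero) auto
  qed
  have Pk0: "P \<kappa>0 = real (card (PiE F (AA b)))"
  proof -
    have "P \<kappa>0 = (\<Prod>x\<in>F. real (card (AA b x)))"
      unfolding P_def \<kappa>0_def using b by (intro prod.cong refl) (auto simp: fac_def AA_def of_nat_diff)
    also have "\<dots> = real (card (PiE F (AA b)))"
      by (simp add: card_PiE F_def finite_FF)
    finally show ?thesis .
  qed
  have "(\<Sum>\<kappa>\<in>K. P \<kappa>) = P \<kappa>0 + (\<Sum>\<kappa>\<in>K - {\<kappa>0}. P \<kappa>)"
    using finK k0K by (rule sum.remove)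
  also have "(\<Sum>\<kappa>\<in>K - {\<kappa>0}. P \<kappa>) = 0" using P0 by simp
  finally have sumP: "(\<Sum>\<kappa>\<in>K. P \<kappa>) = real (card (PiE F (AA b)))" using Pk0 by simp
  have four: "real (b ^ m) * real (card {\<sigma>\<in>PiE F (AA b). \<forall>r<m. (\<Sum>x\<in>F. \<sigma> x * ww b C k x r) mod b = 0})
       = (\<Sum>\<kappa>\<in>K. P \<kappa>)"
    unfolding P_def K_def Kset_def AA_def F_def using fourier_count[OF b0 finite_FF] by simp
  have cpos: "real (card (PiE F (AA b))) > 0"
    using b by (simp add: card_PiE F_def finite_FF AA_def prod_pos)
  show ?thesis
  proof -
    have bpos: "real b ^ m > 0" using b0 by simp
    have "real (card {\<sigma>\<in>PiE F (AA b). \<forall>r<m. (\<Sum>x\<in>F. \<sigma> x * ww b C k x r) mod b = 0})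
          = real (card (PiE F (AA b))) / real b ^ m"
      using four sumP bpos by (simp add: field_simps)
    then show ?thesis unfolding Pr_formula[OF b kN] F_def[symmetric] using cpos by simp
  qed
qed

definition Zs :: "nat \<Rightarrow> (nat \<Rightarrow> nat \<Rightarrow> nat \<Rightarrow> nat) \<Rightarrow> nat \<Rightarrow> nat \<Rightarrow> (nat \<Rightarrow> nat) \<Rightarrow> nat" where
  "Zs m C j l \<kappa> = (\<Sum>r<m. C j l r * \<kappa> r)"

lemma zz_Zs: "zz b m C j i \<kappa> = Zs m C j i \<kappa> mod b"
  unfolding zz_def Zs_def ..

lemma sum_split_exists:
  fixes f :: "'a \<Rightarrow> nat"
  assumes "finite U" "n \<le> (\<Sum>j\<in>U. f j)"
  shows "\<exists>a. (\<forall>j\<in>U. a j \<le> f j) \<and> (\<Sum>j\<in>U. a j) = n"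
  using assms
proof (induction U arbitrary: n rule: finite_induct)
  case empty then show ?case by simp
next
  case (insert x U)
  show ?case
  proof (cases "n \<le> (\<Sum>j\<in>U. f j)")
    case True
    then obtain a where a: "\<forall>j\<in>U. a j \<le> f j" "(\<Sum>j\<in>U. a j) = n" using insert by blast
    define a' where "a' = a(x := 0)"
    have "(\<Sum>j\<in>U. a' j) = (\<Sum>j\<in>U. a j)" unfolding a'_def using insert by (intro sum.cong) auto
    then show ?thesis using a insert by (intro exI[of _ a']) (auto simp: a'_def)
  next
    case False
    define a' where "a' = f(x := n - (\<Sum>j\<in>U. f j))"
    have "(\<Sum>j\<in>U. a' j) = (\<Sum>j\<in>U. f j)" unfolding a'_def using insert by (intro sum.cong) auto
    then show ?thesis using False insert by (intro exI[of _ a']) (auto simp: a'_def)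
  qed
qed

lemma mod_add_cancel_nat:
  fixes x y c b :: nat
  assumes "(x + c) mod b = (y + c) mod b"
  shows "x mod b = y mod b"
proof -
  have "int (x + c) mod int b = int (y + c) mod int b" using assms by (metis of_nat_mod)
  then have "(int (x + c) mod int b - int c) mod int b = (int (y + c) mod int b - int c) mod int b" by simp
  then have "(int x) mod int b = (int y) mod int b" by (simp add: mod_diff_left_eq)
  then show ?thesis by (metis of_nat_eq_iff of_nat_mod)
qed

lemma Zs_lin:
  "Zs m C j l (restrict (\<lambda>r. (\<kappa> r + c * \<kappa>' r) mod b) {..<m}) mod b
   = (Zs m C j l \<kappa> + c * Zs m C j l \<kappa>') mod b"
proof -
  have "Zs m C j l (restrict (\<lambda>r. (\<kappa> r + c * \<kappa>' r) mod b) {..<m}) mod b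
      = (\<Sum>r<m. C j l r * ((\<kappa> r + c * \<kappa>' r) mod b)) mod b"
    unfolding Zs_def by (intro arg_cong[where f="\<lambda>x. x mod b"] sum.cong) auto
  also have "\<dots> = (\<Sum>r<m. ((\<kappa> r + c * \<kappa>' r) mod b) * C j l r) mod b"
    by (simp add: mult.commute)
  also have "\<dots> = (\<Sum>r<m. (\<kappa> r + c * \<kappa>' r) * C j l r) mod b"
    by (rule mod_strip1)
  also have "(\<Sum>r<m. (\<kappa> r + c * \<kappa>' r) * C j l r) = Zs m C j l \<kappa> + c * Zs m C j l \<kappa>'"
    unfolding Zs_def by (simp add: sum.distrib sum_distrib_left algebra_simps)
  finally show ?thesis .
qed

lemma key_bound:
  fixes d :: "nat \<Rightarrow> nat"
  assumes b: "b > 1" and net: "is_net b t m u (net_point b m C)" and fu: "finite u"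
    and j0: "j0 \<in> u" and tm: "t \<le> m"
  defines "Z0 \<equiv> {\<kappa>\<in>Kset b m. \<forall>j\<in>u. (\<forall>l<d j. b dvd Zs m C j l \<kappa>) \<and> (j \<noteq> j0 \<longrightarrow> b dvd Zs m C j (d j) \<kappa>)}"
  defines "Z \<equiv> {\<kappa>\<in>Z0. b dvd Zs m C j0 (d j0) \<kappa>}"
  shows "real (card Z) - real (card (Z0 - Z)) / (real b - 1) \<le> real b ^ t"
proof -
  have b0: "b > 0" using b by simp
  have finK: "finite (Kset b m)" unfolding Kset_def by (auto intro!: finite_PiE)
  have ZZ0: "Z \<subseteq> Z0" unfolding Z_def by auto
  have finZ0: "finite Z0" unfolding Z0_def using finK by auto
  have finZ: "finite Z" using ZZ0 finZ0 by (rule finite_subset)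
  have bm1: "real b - 1 > 0" using b by simp
  define D where "D = (\<Sum>j\<in>u. d j + 1)"
  show ?thesis
  proof (cases "m - t \<le> D")
    case True
    obtain a where a: "\<forall>j\<in>u. a j \<le> d j + 1" "(\<Sum>j\<in>u. a j) = m - t"
      using sum_split_exists[OF fu True[unfolded D_def]] by blast
    define Za where "Za = {\<kappa>\<in>Kset b m. \<forall>j\<in>u. \<forall>i<a j. zz b m C j i \<kappa> = (\<lambda>j i. 0) j i}"
    have cZa: "card Za = b ^ t"
      unfolding Za_def using b net fu a(2) tm by (intro net_count) auto
    have "Z \<subseteq> Za"
    proof
      fix \<kappa> assume \<kappa>: "\<kappa> \<in> Z"
      show "\<kappa> \<in> Za" unfolding Za_def
      proof (intro CollectI conjI ballI allI impI)
        show "\<kappa> \<in> Kset b m" using \<kappa> unfolding Z_def Z0_def by auto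
        fix j i assume j: "j \<in> u" and i: "i < a j"
        then have "i < d j \<or> i = d j" using a(1) by force
        then have "b dvd Zs m C j i \<kappa>"
          using \<kappa> j unfolding Z_def Z0_def by (cases "j = j0") auto
        then show "zz b m C j i \<kappa> = 0" by (simp add: zz_Zs)
      qed
    qed
    then have "card Z \<le> b ^ t" using cZa finK unfolding Za_def
      by (metis (no_types, lifting) card_mono finite_subset mem_Collect_eq subsetI Za_def)
    then have "real (card Z) \<le> real b ^ t" by (metis of_nat_le_iff of_nat_power)
    moreover have "real (card (Z0 - Z)) / (real b - 1) \<ge> 0" using bm1 by simp
    ultimately show ?thesis by linarith
  next
    case False
    define a where "a j = d j + 1 + (if j = j0 then m - t - D else 0)" for j
    have asum: "(\<Sum>j\<in>u. a j) + t = m"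
    proof -
      have "(\<Sum>j\<in>u. a j) = D + (\<Sum>j\<in>u. (if j = j0 then m - t - D else 0))"
        unfolding a_def D_def by (rule sum.distrib)
      also have "(\<Sum>j\<in>u. (if j = j0 then m - t - D else 0)) = m - t - D"
        using fu j0 by (simp add: sum.delta)
      finally show ?thesis using False tm by simp
    qed
    define e where "e j i = (if j = j0 \<and> i = d j0 then 1 else (0::nat))" for j i
    have "card {\<kappa>\<in>Kset b m. \<forall>j\<in>u. \<forall>i<a j. zz b m C j i \<kappa> = e j i} = b ^ t"
      using b net fu asum by (intro net_count) (auto simp: e_def)
    then have "{\<kappa>\<in>Kset b m. \<forall>j\<in>u. \<forall>i<a j. zz b m C j i \<kappa> = e j i} \<noteq> {}"
      using b by (metis card.empty power_not_zero not_one_less_zero zero_less_one less_imp_neq)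
    then obtain \<kappa>s where ks: "\<kappa>s \<in> Kset b m" "\<forall>j\<in>u. \<forall>i<a j. zz b m C j i \<kappa>s = e j i" by blast
    have ks_z: "Zs m C j l \<kappa>s mod b = 0" if "j \<in> u" "l \<le> d j" "\<not> (j = j0 \<and> l = d j0)" for j l
    proof -
      have "l < a j" using that unfolding a_def by simp
      then show ?thesis using ks(2) that unfolding e_def zz_Zs by auto
    qed
    have ks_1: "Zs m C j0 (d j0) \<kappa>s mod b = 1"
    proof -
      have "d j0 < a j0" unfolding a_def by simp
      then show ?thesis using ks(2) j0 unfolding e_def zz_Zs by auto
    qed
    define \<Theta> where "\<Theta> p = restrict (\<lambda>r. (fst p r + snd p * \<kappa>s r) mod b) {..<m}" for p :: "(nat \<Rightarrow> nat) \<times> nat"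
    have Th_lin: "Zs m C j l (\<Theta> p) mod b = (Zs m C j l (fst p) + snd p * Zs m C j l \<kappa>s) mod b" for j l p
      unfolding \<Theta>_def by (rule Zs_lin)
    have Th_in: "\<Theta> ` (Z \<times> {..<b}) \<subseteq> Z0"
    proof
      fix y assume "y \<in> \<Theta> ` (Z \<times> {..<b})"
      then obtain \<kappa> c where \<kappa>: "\<kappa> \<in> Z" and c: "c \<in> {..<b}" and y: "y = \<Theta> (\<kappa>, c)" by auto
      have dv: "b dvd Zs m C j l (\<Theta> (\<kappa>, c))" if "b dvd Zs m C j l \<kappa>" "b dvd Zs m C j l \<kappa>s" for j l
      proof -
        have "Zs m C j l (\<Theta> (\<kappa>, c)) mod b = (Zs m C j l \<kappa> + c * Zs m C j l \<kappa>s) mod b"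
          using Th_lin[of j l "(\<kappa>, c)"] by simp
        also have "\<dots> = 0" using that by simp
        finally show ?thesis by (simp add: dvd_eq_mod_eq_0)
      qed
      have inK: "\<Theta> (\<kappa>, c) \<in> Kset b m" unfolding \<Theta>_def Kset_def using b0 by auto
      have A: "b dvd Zs m C j l (\<Theta> (\<kappa>, c))" if j: "j \<in> u" and l: "l < d j" for j l
      proof -
        have "b dvd Zs m C j l \<kappa>" using \<kappa> j l unfolding Z_def Z0_def by auto
        moreover have "b dvd Zs m C j l \<kappa>s" using ks_z[OF j, of l] l by (auto simp: dvd_eq_mod_eq_0)
        ultimately show ?thesis by (rule dv)
      qed
      have B: "b dvd Zs m C j (d j) (\<Theta> (\<kappa>, c))" if j: "j \<in> u" and jj: "j \<noteq> j0" for j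
      proof -
        have "b dvd Zs m C j (d j) \<kappa>" using \<kappa> j jj unfolding Z_def Z0_def by auto
        moreover have "b dvd Zs m C j (d j) \<kappa>s" using ks_z[OF j, of "d j"] jj by (auto simp: dvd_eq_mod_eq_0)
        ultimately show ?thesis by (rule dv)
      qed
      show "y \<in> Z0" unfolding Z0_def y using inK A B by auto
    qed
    have Th_inj: "inj_on \<Theta> (Z \<times> {..<b})"
    proof (rule inj_onI)
      fix p p' assume p: "p \<in> Z \<times> {..<b}" and p': "p' \<in> Z \<times> {..<b}" and eqp: "\<Theta> p = \<Theta> p'"
      obtain \<kappa> c where pp: "p = (\<kappa>, c)" by (cases p)
      obtain \<kappa>' c' where pp': "p' = (\<kappa>', c')" by (cases p')
      have \<kappa>: "\<kappa> \<in> Z" and c: "c \<in> {..<b}" and \<kappa>': "\<kappa>' \<in> Z" and c': "c' \<in> {..<b}"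
        using p p' pp pp' by auto
      have eq: "\<Theta> (\<kappa>, c) = \<Theta> (\<kappa>', c')" using eqp pp pp' by simp
      have z1: "Zs m C j0 (d j0) \<kappa> mod b = 0" "Zs m C j0 (d j0) \<kappa>' mod b = 0"
        using \<kappa> \<kappa>' unfolding Z_def by auto
      have "(Zs m C j0 (d j0) \<kappa> + c * Zs m C j0 (d j0) \<kappa>s) mod b
          = (Zs m C j0 (d j0) \<kappa>' + c' * Zs m C j0 (d j0) \<kappa>s) mod b"
        using Th_lin[of j0 "d j0" "(\<kappa>, c)"] Th_lin[of j0 "d j0" "(\<kappa>', c')"] eq by simp
      then have "(Zs m C j0 (d j0) \<kappa> mod b + (c * (Zs m C j0 (d j0) \<kappa>s mod b)) mod b) mod b
          = (Zs m C j0 (d j0) \<kappa>' mod b + (c' * (Zs m C j0 (d j0) \<kappa>s mod b)) mod b) mod b"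
        by (metis mod_add_eq mod_mult_right_eq)
      then have "c mod b = c' mod b" using z1 ks_1 by simp
      then have cc: "c = c'" using c c' by simp
      have "\<kappa> r = \<kappa>' r" for r
      proof (cases "r < m")
        case True
        have "(\<kappa> r + c * \<kappa>s r) mod b = (\<kappa>' r + c * \<kappa>s r) mod b"
          using fun_cong[OF eq, of r] True cc unfolding \<Theta>_def by simp
        then have "\<kappa> r mod b = \<kappa>' r mod b" by (rule mod_add_cancel_nat)
        moreover have "\<kappa> r < b" "\<kappa>' r < b" using \<kappa> \<kappa>' True unfolding Z_def Z0_def Kset_def by auto
        ultimately show ?thesis by simp
      next
        case False
        then show ?thesis using \<kappa> \<kappa>' unfolding Z_def Z0_def Kset_def by (auto simp: PiE_iff extensional_def)
      qed
      then show "p = p'" using cc pp pp' by auto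
    qed
    have "card (Z \<times> {..<b}) \<le> card Z0"
      using card_inj_on_le[OF Th_inj Th_in finZ0] .
    then have le: "card Z * b \<le> card Z0" by (simp add: card_cartesian_product)
    have "card (Z0 - Z) = card Z0 - card Z" using finZ ZZ0 by (simp add: card_Diff_subset)
    moreover have cz: "card Z \<le> card Z0" using card_mono[OF finZ0 ZZ0] .
    ultimately have e1: "real (card (Z0 - Z)) = real (card Z0) - real (card Z)" by (simp add: of_nat_diff)
    have e2: "real (card Z) * real b \<le> real (card Z0)" using le by (metis of_nat_le_iff of_nat_mult)
    have e3: "(real b - 1) * real (card Z) = real (card Z) * real b - real (card Z)" by (simp add: algebra_simps)
    have "real (card (Z0 - Z)) \<ge> (real b - 1) * real (card Z)"
      using e1 e2 e3 by linarith
    then have "real (card (Z0 - Z)) / (real b - 1) \<ge> real (card Z)"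
      using bm1 by (simp add: field_simps)
    moreover have "real b ^ t \<ge> 0" by simp
    ultimately show ?thesis by linarith
  qed
qed

lemma top_digit:
  assumes b: "b > 1" and k: "0 < k" "k < b ^ m"
  shows "\<exists>d<m. digit b k d \<noteq> 0 \<and> (\<forall>i. d < i \<longrightarrow> digit b k i = 0)"
proof -
  have m: "m > 0" using k by (cases m) auto
  define d where "d = (LEAST i. k < b ^ Suc i)"
  have Pm: "k < b ^ Suc (m - 1)" using k m by simp
  have kd: "k < b ^ Suc d" unfolding d_def by (rule LeastI[of _ "m - 1"]) (rule Pm)
  have dm: "d \<le> m - 1" unfolding d_def by (rule Least_le) (rule Pm)
  have bd: "b ^ d \<le> k"
  proof (cases d)
    case 0 then show ?thesis using k by simp
  next
    case (Suc d')
    have "\<not> k < b ^ Suc d'" using Suc unfolding d_def by (metis lessI not_less_Least)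
    then show ?thesis using Suc by simp
  qed
  have q: "k div b ^ d < b"
    using kd b by (simp add: div_less_iff_less_mult mult.commute)
  have q1: "k div b ^ d \<ge> 1" using div_le_mono[OF bd, of "b ^ d"] b by simp
  have "digit b k d \<noteq> 0" unfolding digit_def using q q1 by simp
  moreover have "digit b k i = 0" if "d < i" for i
    using digit_high_zero[of b k "Suc d" i] b kd that by simp
  moreover have "d < m" using dm m by simp
  ultimately show ?thesis by blast
qed

definition rho :: "nat \<Rightarrow> bool \<Rightarrow> nat \<Rightarrow> real" where
  "rho b z g = (if b dvd g then 1 else if z then - 1 / (real b - 1) else 0)"

lemma fac_rho: "b > 1 \<Longrightarrow> fac b z g = real (card (if z then {1..<b} else {0..<b})) * rho b z g"
  by (auto simp: fac_def rho_def of_nat_diff)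


lemma prod_FF:
  "(\<Prod>x\<in>FF s m N. f x) = (\<Prod>j\<in>{1..s}. \<Prod>p\<in>(SIGMA i:{..<N}. {l. l < m \<and> l \<le> i}). f (j, p))"
  unfolding FF_def by (subst prod.Sigma) (auto simp: split_def intro!: finite_SigmaI)

lemma gs_eq: "(\<Sum>r<m. \<kappa> r * ww b C k (j, i, l) r) = digit b (k j) i * Zs m C j l \<kappa>"
  unfolding ww_def Zs_def by (simp add: sum_distrib_left mult_ac)

lemma sum_indic:
  assumes "finite K" "S \<subseteq> K"
  shows "(\<Sum>\<kappa>\<in>K. if \<kappa> \<in> S then (1::real) else 0) = real (card S)"
proof -
  have "(\<Sum>\<kappa>\<in>K. if \<kappa> \<in> S then (1::real) else 0) = (\<Sum>\<kappa>\<in>{\<kappa>\<in>K. \<kappa> \<in> S}. 1)"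
    using assms(1) by (rule sum.inter_filter[symmetric])
  also have "{\<kappa>\<in>K. \<kappa> \<in> S} = S" using assms(2) by auto
  finally show ?thesis by simp
qed

lemma case1:
  assumes pb: "prime b" and ks: "\<forall>j\<in>{1..s}. k j < b ^ m"
    and u_def: "u = {j\<in>{1..s}. k j \<noteq> 0}" and une: "u \<noteq> {}"
    and net: "is_net b t m u (net_point b m C)"
  shows "measure (L_measure b m s)
           {\<omega> \<in> space (L_measure b m s). in_dual b m s (\<lambda>j. mat_prod b m (L_of m \<omega> j) (C j)) k}
         \<le> (real b / (real b - 1)) ^ (card u - 1) * real b powr (real t - real m)"
proof -
  have b: "b > 1" using prime_gt_1_nat[OF pb] .
  have b0: "b > 0" using b by simp
  have bm1: "real b - 1 > 0" using b by simp
  have fu: "finite u" and us: "u \<subseteq> {1..s}" unfolding u_def by auto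
  obtain j0 where j0: "j0 \<in> u" using une by blast
  have "\<forall>j\<in>u. \<exists>d<m. digit b (k j) d \<noteq> 0 \<and> (\<forall>i. d < i \<longrightarrow> digit b (k j) i = 0)"
    using top_digit[OF b] ks unfolding u_def by auto
  then obtain d where d: "\<forall>j\<in>u. d j < m \<and> digit b (k j) (d j) \<noteq> 0 \<and> (\<forall>i. d j < i \<longrightarrow> digit b (k j) i = 0)"
    by (metis (no_types, lifting) bchoice)
  define F where "F = FF s m m"
  define F2 where "F2 = (SIGMA i:{..<m}. {l. l < m \<and> l \<le> i})"
  define K where "K = Kset b m"
  define lin where "lin \<sigma> = (\<forall>r<m. (\<Sum>x\<in>F. \<sigma> x * ww b C k x r) mod b = 0)" for \<sigma> :: "nat \<times> nat \<times> nat \<Rightarrow> nat"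
  define G where "G = {\<sigma>\<in>PiE F (AA b). lin \<sigma>}"
  define \<Omega> where "\<Omega> = PiE F (AA b)"
  have finF: "finite F" unfolding F_def by (rule finite_FF)
  have Pr: "measure (L_measure b m s)
           {\<omega> \<in> space (L_measure b m s). in_dual b m s (\<lambda>j. mat_prod b m (L_of m \<omega> j) (C j)) k}
         = real (card G) / real (card \<Omega>)"
    unfolding Pr_formula[OF b ks] G_def \<Omega>_def F_def lin_def ..
  have cO: "real (card \<Omega>) > 0"
    using b unfolding \<Omega>_def by (simp add: card_PiE finF AA_def prod_pos)
  have GO: "card G \<le> card \<Omega>" unfolding G_def \<Omega>_def
    by (rule card_mono) (auto simp: finF AA_def intro!: finite_PiE)
  show ?thesis
  proof (cases "t \<le> m")
    case False
    have "real (card G) / real (card \<Omega>) \<le> 1" using GO cO by simp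
    also have "1 \<le> (real b / (real b - 1)) ^ (card u - 1) * real b powr (real t - real m)"
    proof -
      have "1 \<le> (real b / (real b - 1)) ^ (card u - 1)" using bm1 by (intro one_le_power) simp
      moreover have "1 \<le> real b powr (real t - real m)" using False b by (intro ge_one_powr_ge_zero) auto
      ultimately show ?thesis by (metis mult_mono' mult_1 zero_le_one)
    qed
    finally show ?thesis unfolding Pr .
  next
    case tm: True
    define nzr where "nzr x = (nzf x \<and> \<not> (fst x \<in> u \<and> fst x \<noteq> j0 \<and> fst (snd x) = d (fst x)))" for x :: "nat \<times> nat \<times> nat"
    define Ar where "Ar x = (if nzr x then {1..<b} else {0..<b::nat})" for x
    define G' where "G' = {\<sigma>\<in>PiE F Ar. lin \<sigma>}"
    define \<Omega>' where "\<Omega>' = PiE F Ar"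
    define Z0 where "Z0 = {\<kappa>\<in>Kset b m. \<forall>j\<in>u. (\<forall>l<d j. b dvd Zs m C j l \<kappa>) \<and> (j \<noteq> j0 \<longrightarrow> b dvd Zs m C j (d j) \<kappa>)}"
    define Z where "Z = {\<kappa>\<in>Z0. b dvd Zs m C j0 (d j0) \<kappa>}"
    define \<tau> where "\<tau> j \<kappa> = (if j \<in> u then (if \<forall>l<d j. b dvd Zs m C j l \<kappa> then
        (if b dvd Zs m C j (d j) \<kappa> then 1 else if j = j0 then - 1 / (real b - 1) else 0) else 0) else 1)" for j \<kappa>
    have nzr_simp: "nzr (j, i, l) = (i = l \<and> \<not> (j \<in> u \<and> j \<noteq> j0 \<and> i = d j))" for j i l
      unfolding nzr_def nzf_def by simp
    have GG': "card G \<le> card G'"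
    proof (rule card_mono)
      show "finite G'" unfolding G'_def
        by (rule finite_subset[of _ "PiE F Ar"]) (auto simp: finF Ar_def intro!: finite_PiE)
      have "AA b x \<subseteq> Ar x" for x unfolding AA_def Ar_def nzr_def by auto
      then have "PiE F (AA b) \<subseteq> PiE F Ar" by (intro PiE_mono) auto
      then show "G \<subseteq> G'" unfolding G_def G'_def by blast
    qed
    have four: "real (b ^ m) * real (card G') = (\<Sum>\<kappa>\<in>K. \<Prod>x\<in>F. fac b (nzr x) (\<Sum>r<m. \<kappa> r * ww b C k x r))"
      unfolding G'_def Ar_def lin_def K_def Kset_def by (rule fourier_count[OF b0 finF])
    have tau: "(\<Prod>p\<in>F2. rho b (nzr (j, p)) (\<Sum>r<m. \<kappa> r * ww b C k (j, p) r)) = \<tau> j \<kappa>"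
      if j: "j \<in> {1..s}" for j \<kappa>
    proof -
      let ?f = "\<lambda>p. rho b (nzr (j, p)) (\<Sum>r<m. \<kappa> r * ww b C k (j, p) r)"
      have gs: "(\<Sum>r<m. \<kappa> r * ww b C k (j, p) r) = digit b (k j) (fst p) * Zs m C j (snd p) \<kappa>" for p
        by (cases p) (simp add: gs_eq)
      have finF2: "finite F2" unfolding F2_def by (intro finite_SigmaI) auto
      show ?thesis
      proof (cases "j \<in> u")
        case False
        then have "k j = 0" using j unfolding u_def by auto
        then have "?f p = 1" for p unfolding gs by (simp add: digit_def rho_def)
        then show ?thesis using False by (simp add: \<tau>_def)
      next
        case ju: True
        have dj: "d j < m" "digit b (k j) (d j) \<noteq> 0" "\<And>i. d j < i \<Longrightarrow> digit b (k j) i = 0"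
          using d ju by auto
        have ndv: "\<not> b dvd digit b (k j) (d j)"
          using dj(2) digit_lt[OF b0, of "k j" "d j"] by (auto dest: dvd_imp_le)
        have dvd_iff: "b dvd digit b (k j) (d j) * z \<longleftrightarrow> b dvd z" for z
          using ndv pb by (simp add: prime_dvd_mult_iff)
        show ?thesis
        proof (cases "\<forall>l<d j. b dvd Zs m C j l \<kappa>")
          case A: True
          have ddF2: "(d j, d j) \<in> F2" unfolding F2_def using dj by auto
          have one: "?f p = 1" if p: "p \<in> F2 - {(d j, d j)}" for p
          proof -
            obtain i l where pil: "p = (i, l)" by (cases p)
            have il: "l \<le> i" "i < m" "(i, l) \<noteq> (d j, d j)" using p pil unfolding F2_def by auto
            have "b dvd digit b (k j) i * Zs m C j l \<kappa>"
            proof (cases "digit b (k j) i = 0")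
              case False
              then have "i \<le> d j" using dj(3) not_less by blast
              then have "l < d j" using il by auto
              then show ?thesis using A by auto
            qed simp
            then show ?thesis unfolding gs pil rho_def by simp
          qed
          have "(\<Prod>p\<in>F2. ?f p) = ?f (d j, d j) * (\<Prod>p\<in>F2 - {(d j, d j)}. ?f p)"
            using finF2 ddF2 by (rule prod.remove)
          also have "(\<Prod>p\<in>F2 - {(d j, d j)}. ?f p) = 1" using one by simp
          also have "?f (d j, d j) = \<tau> j \<kappa>"
            unfolding gs \<tau>_def rho_def using ju A by (simp add: nzr_simp dvd_iff)
          finally show ?thesis by simp
        next
          case B: False
          then obtain l where l: "l < d j" "\<not> b dvd Zs m C j l \<kappa>" by blast
          have dlF2: "(d j, l) \<in> F2" unfolding F2_def using dj l by auto
          have "?f (d j, l) = 0" unfolding gs rho_def using l by (simp add: nzr_simp dvd_iff)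
          then have "(\<Prod>p\<in>F2. ?f p) = 0" using finF2 dlF2 by (intro prod_zero) auto
          moreover have "\<tau> j \<kappa> = 0" by (simp only: \<tau>_def if_P[OF ju] if_not_P[OF B])
          ultimately show ?thesis by simp
        qed
      qed
    qed
    have ind: "(\<Prod>j\<in>u. \<tau> j \<kappa>) = (if \<kappa> \<in> Z then 1 else if \<kappa> \<in> Z0 then - 1 / (real b - 1) else 0)"
      if \<kappa>: "\<kappa> \<in> K" for \<kappa>
    proof -
      consider (inZ) "\<kappa> \<in> Z" | (inZ0) "\<kappa> \<in> Z0" "\<kappa> \<notin> Z" | (out) "\<kappa> \<notin> Z0" unfolding Z_def by blast
      then show ?thesis
      proof cases
        case inZ
        then have "\<tau> j \<kappa> = 1" if "j \<in> u" for j using that unfolding Z_def Z0_def \<tau>_def by (cases "j = j0") auto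
        then show ?thesis using inZ by simp
      next
        case inZ0
        have t0: "\<tau> j0 \<kappa> = - 1 / (real b - 1)" using inZ0 j0 unfolding Z_def Z0_def \<tau>_def by auto
        have t1: "\<tau> j \<kappa> = 1" if "j \<in> u - {j0}" for j using that inZ0 unfolding Z0_def \<tau>_def by auto
        have "(\<Prod>j\<in>u. \<tau> j \<kappa>) = \<tau> j0 \<kappa> * (\<Prod>j\<in>u - {j0}. \<tau> j \<kappa>)" using fu j0 by (rule prod.remove)
        also have "(\<Prod>j\<in>u - {j0}. \<tau> j \<kappa>) = 1" using t1 by simp
        finally show ?thesis using inZ0 t0 by simp
      next
        case out
        then obtain j where j: "j \<in> u" "\<not> ((\<forall>l<d j. b dvd Zs m C j l \<kappa>) \<and> (j \<noteq> j0 \<longrightarrow> b dvd Zs m C j (d j) \<kappa>))"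
          using \<kappa> unfolding Z0_def K_def by blast
        then have "\<tau> j \<kappa> = 0" unfolding \<tau>_def by auto
        then have "(\<Prod>j\<in>u. \<tau> j \<kappa>) = 0" using fu j by (intro prod_zero) auto
        then show ?thesis using out unfolding Z_def by auto
      qed
    qed
    have prodF: "(\<Prod>x\<in>F. fac b (nzr x) (\<Sum>r<m. \<kappa> r * ww b C k x r))
        = real (card \<Omega>') * (if \<kappa> \<in> Z then 1 else if \<kappa> \<in> Z0 then - 1 / (real b - 1) else 0)"
      if \<kappa>: "\<kappa> \<in> K" for \<kappa>
    proof -
      have "(\<Prod>x\<in>F. fac b (nzr x) (\<Sum>r<m. \<kappa> r * ww b C k x r))
          = (\<Prod>x\<in>F. real (card (Ar x)) * rho b (nzr x) (\<Sum>r<m. \<kappa> r * ww b C k x r))"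
        unfolding Ar_def by (intro prod.cong refl fac_rho[OF b])
      also have "\<dots> = (\<Prod>x\<in>F. real (card (Ar x))) * (\<Prod>x\<in>F. rho b (nzr x) (\<Sum>r<m. \<kappa> r * ww b C k x r))"
        by (rule prod.distrib)
      also have "(\<Prod>x\<in>F. real (card (Ar x))) = real (card \<Omega>')"
        unfolding \<Omega>'_def by (simp add: card_PiE finF)
      also have "(\<Prod>x\<in>F. rho b (nzr x) (\<Sum>r<m. \<kappa> r * ww b C k x r))
          = (\<Prod>j\<in>{1..s}. \<Prod>p\<in>F2. rho b (nzr (j, p)) (\<Sum>r<m. \<kappa> r * ww b C k (j, p) r))"
        unfolding F_def F2_def by (rule prod_FF)
      also have "\<dots> = (\<Prod>j\<in>{1..s}. \<tau> j \<kappa>)"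
        by (intro prod.cong refl tau)
      also have "\<dots> = (\<Prod>j\<in>u. \<tau> j \<kappa>)"
        using us by (intro prod.mono_neutral_right) (auto simp: \<tau>_def)
      also have "\<dots> = (if \<kappa> \<in> Z then 1 else if \<kappa> \<in> Z0 then - 1 / (real b - 1) else 0)"
        by (rule ind[OF \<kappa>])
      finally show ?thesis .
    qed
    have ZZ0: "Z \<subseteq> Z0" and Z0K: "Z0 \<subseteq> K" unfolding Z_def Z0_def K_def by auto
    have finK: "finite K" unfolding K_def Kset_def by (auto intro!: finite_PiE)
    have sumind: "(\<Sum>\<kappa>\<in>K. (if \<kappa> \<in> Z then 1 else if \<kappa> \<in> Z0 then - 1 / (real b - 1) else 0))
        = real (card Z) - real (card (Z0 - Z)) / (real b - 1)"
    proof -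
      have "(\<Sum>\<kappa>\<in>K. (if \<kappa> \<in> Z then 1 else if \<kappa> \<in> Z0 then - 1 / (real b - 1) else 0))
          = (\<Sum>\<kappa>\<in>K. (if \<kappa> \<in> Z then 1 else 0) + (- 1 / (real b - 1)) * (if \<kappa> \<in> Z0 - Z then 1 else 0))"
        by (intro sum.cong refl) auto
      also have "\<dots> = (\<Sum>\<kappa>\<in>K. if \<kappa> \<in> Z then 1 else 0) + (- 1 / (real b - 1)) * (\<Sum>\<kappa>\<in>K. if \<kappa> \<in> Z0 - Z then 1 else 0)"
        by (subst sum.distrib) (simp only: sum_distrib_left)
      also have "(\<Sum>\<kappa>\<in>K. if \<kappa> \<in> Z then (1::real) else 0) = real (card Z)"
        using finK ZZ0 Z0K by (intro sum_indic) auto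
      also have "(\<Sum>\<kappa>\<in>K. if \<kappa> \<in> Z0 - Z then (1::real) else 0) = real (card (Z0 - Z))"
        using finK Z0K by (intro sum_indic) auto
      finally show ?thesis by simp
    qed
    have main: "real (b ^ m) * real (card G') = real (card \<Omega>') * (real (card Z) - real (card (Z0 - Z)) / (real b - 1))"
      unfolding four using prodF sumind by (simp add: sum_distrib_left[symmetric])
    have kb: "real (card Z) - real (card (Z0 - Z)) / (real b - 1) \<le> real b ^ t"
      unfolding Z_def Z0_def using key_bound[OF b net fu j0 tm] by simp
    have ratio: "real (card \<Omega>') = real (card \<Omega>) * (real b / (real b - 1)) ^ (card u - 1)"
    proof -
      define Rel where "Rel = (\<lambda>j. (j, d j, d j)) ` (u - {j0})"
      have RelF: "Rel \<subseteq> F" unfolding Rel_def F_def FF_def using us d by auto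
      have cx: "real (card (Ar x)) = real (card (AA b x)) * (if x \<in> Rel then real b / (real b - 1) else 1)"
        for x
      proof (cases "x \<in> Rel")
        case True
        then obtain j where "j \<in> u" "j \<noteq> j0" "x = (j, d j, d j)" unfolding Rel_def by auto
        then have "nzf x" "\<not> nzr x" unfolding nzr_def nzf_def by auto
        then show ?thesis using True bm1 b unfolding Ar_def AA_def by (simp add: of_nat_diff field_simps)
      next
        case False
        have "nzr x = nzf x"
        proof -
          obtain j i l where x: "x = (j, i, l)" by (cases x)
          show ?thesis using False unfolding x nzr_def nzf_def Rel_def by auto
        qed
        then show ?thesis using False unfolding Ar_def AA_def by simp
      qed
      have "real (card \<Omega>') = (\<Prod>x\<in>F. real (card (Ar x)))"
        unfolding \<Omega>'_def by (simp add: card_PiE finF)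
      also have "\<dots> = (\<Prod>x\<in>F. real (card (AA b x))) * (\<Prod>x\<in>F. if x \<in> Rel then real b / (real b - 1) else 1)"
        unfolding cx by (rule prod.distrib)
      also have "(\<Prod>x\<in>F. real (card (AA b x))) = real (card \<Omega>)"
        unfolding \<Omega>_def by (simp add: card_PiE finF)
      also have "(\<Prod>x\<in>F. if x \<in> Rel then real b / (real b - 1) else 1) = (\<Prod>x\<in>{x\<in>F. x \<in> Rel}. real b / (real b - 1))"
        using finF by (rule prod.inter_filter[symmetric])
      also have "{x\<in>F. x \<in> Rel} = Rel" using RelF by auto
      also have "(\<Prod>x\<in>Rel. real b / (real b - 1)) = (real b / (real b - 1)) ^ card Rel" by simp
      also have "card Rel = card u - 1"
      proof -
        have "inj_on (\<lambda>j. (j, d j, d j)) (u - {j0})" by (rule inj_onI) auto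
        then have "card Rel = card (u - {j0})" unfolding Rel_def by (rule card_image)
        also have "\<dots> = card u - 1" using j0 fu by simp
        finally show ?thesis .
      qed
      finally show ?thesis .
    qed
    have "real (card G) / real (card \<Omega>) \<le> real (card G') / real (card \<Omega>)"
      using GG' cO by (simp add: divide_right_mono)
    also have "\<dots> = (real b / (real b - 1)) ^ (card u - 1) * ((real (card Z) - real (card (Z0 - Z)) / (real b - 1)) / real b ^ m)"
    proof -
      define W where "W = real (card Z) - real (card (Z0 - Z)) / (real b - 1)"
      define R where "R = (real b / (real b - 1)) ^ (card u - 1)"
      have bpos: "real b ^ m > 0" using b0 by simp
      have m2: "real b ^ m * real (card G') = real (card \<Omega>') * W" using main unfolding W_def by simp
      have r2: "real (card \<Omega>') = real (card \<Omega>) * R" using ratio unfolding R_def .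
      have "real (card G') = real (card \<Omega>') * W / real b ^ m" using m2 bpos by (simp add: field_simps)
      then have "real (card G') / real (card \<Omega>) = R * (W / real b ^ m)" using r2 cO by (simp add: field_simps)
      then show ?thesis unfolding W_def R_def .
    qed
    also have "\<dots> \<le> (real b / (real b - 1)) ^ (card u - 1) * (real b ^ t / real b ^ m)"
      using kb b0 bm1 by (intro mult_left_mono divide_right_mono) auto
    also have "real b ^ t / real b ^ m = real b powr (real t - real m)"
      using b0 by (simp add: powr_diff powr_realpow)
    finally show ?thesis unfolding Pr .
  qed
qed

theorem lemma2p16:
  fixes b m s t :: nat and C :: "nat \<Rightarrow> nat \<Rightarrow> nat \<Rightarrow> nat"
    and tu :: "nat set \<Rightarrow> nat" and k :: "nat \<Rightarrow> nat"
  assumes "prime b" and "m \<ge> 1" and "s \<ge> 1"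
    and "\<forall>j\<in>{1..s}. \<forall>i<m. \<forall>l<m. C j i l < b"
    and "is_net b t m {1..s} (net_point b m C)"
    and "\<forall>u. u \<subseteq> {1..s} \<and> u \<noteq> {} \<longrightarrow> is_net b (tu u) m u (net_point b m C)"
    and "\<exists>j\<in>{1..s}. k j \<noteq> 0"
  shows "let u = {j\<in>{1..s}. k j \<noteq> 0};
             Pr = measure (L_measure b m s)
                    {\<omega> \<in> space (L_measure b m s).
                       in_dual b m s (\<lambda>j. mat_prod b m (L_of m \<omega> j) (C j)) k}
         in ((\<forall>j\<in>{1..s}. k j < b ^ m) \<longrightarrow>
               Pr \<le> (real b / (real b - 1)) ^ (card u - 1) * real b powr (real (tu u) - real m))
          \<and> ((\<exists>j\<in>{1..s}. k j \<ge> b ^ m) \<and> (\<forall>j\<in>{1..s}. nonsingular b m (C j)) \<longrightarrow>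
               Pr = 1 / real b ^ m)"
proof -
  have b: "b > 1" using prime_gt_1_nat[OF assms(1)] .
  define u where "u = {j\<in>{1..s}. k j \<noteq> 0}"
  have une: "u \<noteq> {}" using assms(7) unfolding u_def by auto
  have us: "u \<subseteq> {1..s}" unfolding u_def by auto
  have netu: "is_net b (tu u) m u (net_point b m C)"
    using assms(6) une us by blast
  show ?thesis
    unfolding Let_def u_def[symmetric]
  proof (intro conjI impI)
    assume ks: "\<forall>j\<in>{1..s}. k j < b ^ m"
    show "measure (L_measure b m s)
           {\<omega> \<in> space (L_measure b m s). in_dual b m s (\<lambda>j. mat_prod b m (L_of m \<omega> j) (C j)) k}
         \<le> (real b / (real b - 1)) ^ (card u - 1) * real b powr (real (tu u) - real m)"
      by (rule case1[OF assms(1) ks u_def une netu])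
  next
    assume h: "(\<exists>j\<in>{1..s}. b ^ m \<le> k j) \<and> (\<forall>j\<in>{1..s}. nonsingular b m (C j))"
    then obtain j1 where j1: "j1 \<in> {1..s}" "b ^ m \<le> k j1" by blast
    show "measure (L_measure b m s)
           {\<omega> \<in> space (L_measure b m s). in_dual b m s (\<lambda>j. mat_prod b m (L_of m \<omega> j) (C j)) k}
         = 1 / real b ^ m"
      using case2[of b j1 s m k C, OF assms(1) j1] h by blast
  qed
qed

end
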